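(* Let $n\ge 1$ and $k\ge 1$ be integers with $n\ge 2k-1$. Then $$\mathit{GenF}(n,k)=\{0^i1(01)^{k-1}0^{n-2k+1-i}\ :\ 0\le i\le n-2k+1\}.$$ In particular $|\mathit{GenF}(n,k)|=n-2k+2$.
   Context: The weight of a binary word is its number of 1's. $F_n(2,k)$ is the set of binary words of length $n$ and weight $k$ containing no two consecutive 1's. A homogeneous transposition of a binary word exchanges a 1 and a 0 such that no 1 occurs strictly between the two exchanged positions. For a set $S$ of binary words of the same length and weight and $\alpha\in S$, the list obtained by applying the greedy algorithm for $S$ to $\alpha$ is built as follows: start with the list $(\alpha)$; repeatedly, for the last word $w$ of the current list, among all words obtainable from $w$ by one homogeneous transposition that lie in $S$ and do not already occur in the list, choose the one obtained by transposing the leftmost possible 1 with (among transpositions of that 1) the leftmost possible 0, and append it; stop when no such word exists. $\mathcal{F}(\alpha)$ denotes the list obtained by applying the greedy algorithm for $F_n(2,k)$ to $\alpha\in F_n(2,k)$, and $\mathit{GenF}(n,k)$ is the set of $\alpha\in F_n(2,k)$ such that $\mathcal{F}(\alpha)$ contains every word of $F_n(2,k)$. *)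

theory Defs
  imports Main
begin

definition weight :: "nat list \<Rightarrow> nat" where
  "weight w = length (filter (\<lambda>x. x = 1) w)"

definition Fib_words :: "nat \<Rightarrow> nat \<Rightarrow> nat list set" where
  "Fib_words n k = {w. length w = n \<and> set w \<subseteq> {0,1} \<and> weight w = k \<and>
      (\<forall>i. Suc i < n \<longrightarrow> \<not> (w ! i = 1 \<and> w ! Suc i = 1))}"

definition swap_pos :: "nat list \<Rightarrow> nat \<Rightarrow> nat \<Rightarrow> nat list" where
  "swap_pos w p q = w[p := w ! q, q := w ! p]"

definition htrans :: "nat list \<Rightarrow> nat \<Rightarrow> nat \<Rightarrow> bool" where
  "htrans w p q \<longleftrightarrow> p < length w \<and> q < length w \<and> w ! p = 1 \<and> w ! q = 0 \<and>
      (\<forall>j. min p q < j \<and> j < max p q \<longrightarrow> w ! j \<noteq> 1)"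

definition cands :: "nat list set \<Rightarrow> nat list list \<Rightarrow> (nat \<times> nat) set" where
  "cands S L = {(p,q). htrans (last L) p q \<and> swap_pos (last L) p q \<in> S
                       \<and> swap_pos (last L) p q \<notin> set L}"

definition greedy_step :: "nat list set \<Rightarrow> nat list list \<Rightarrow> nat list list" where
  "greedy_step S L =
     (if cands S L = {} then L
      else (let p = (LEAST p. \<exists>q. (p,q) \<in> cands S L);
                q = (LEAST q. (p,q) \<in> cands S L)
            in L @ [swap_pos (last L) p q]))"

text \<open>Each effective step appends a new word of S, so after card S iterations
  the process has stopped (for finite S and \<alpha> \<in> S).\<close>
definition greedy :: "nat list set \<Rightarrow> nat list \<Rightarrow> nat list list" where
  "greedy S \<alpha> = (greedy_step S ^^ card S) [\<alpha>]"

definition GenF :: "nat \<Rightarrow> nat \<Rightarrow> nat list set" where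
  "GenF n k = {\<alpha> \<in> Fib_words n k. Fib_words n k \<subseteq> set (greedy (Fib_words n k) \<alpha>)}"

end

theory Submission
  imports Defs
begin

definition wd :: "nat \<Rightarrow> nat set \<Rightarrow> nat list" where
  "wd m A = map (\<lambda>i. if i \<in> A then 1 else 0) [0..<m]"

lemma wd_length[simp]: "length (wd m A) = m" by (simp add: wd_def)
lemma wd_nth[simp]: "i < m \<Longrightarrow> wd m A ! i = (if i \<in> A then 1 else 0)" by (simp add: wd_def)

lemma wd_inj: "A \<subseteq> {..<m} \<Longrightarrow> B \<subseteq> {..<m} \<Longrightarrow> wd m A = wd m B \<longleftrightarrow> A = B"
proof
  assume a: "A \<subseteq> {..<m}" "B \<subseteq> {..<m}" "wd m A = wd m B"
  show "A = B"
  proof (intro set_eqI iffI)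
    fix x assume "x \<in> A" then have "x < m" using a by auto
    then show "x \<in> B" using a(3) \<open>x \<in> A\<close> wd_nth[of x m A] wd_nth[of x m B] by (auto split: if_splits)
  next
    fix x assume "x \<in> B" then have "x < m" using a by auto
    then show "x \<in> A" using a(3) \<open>x \<in> B\<close> wd_nth[of x m A] wd_nth[of x m B] by (auto split: if_splits)
  qed
qed simp

lemma wd_cong: "A \<inter> {..<m} = B \<inter> {..<m} \<Longrightarrow> wd m A = wd m B"
  unfolding wd_def by (rule map_cong) auto

lemma htrans_wd: "htrans (wd m A) p q \<longleftrightarrow> p < m \<and> q < m \<and> p \<in> A \<and> q \<notin> A \<and>
     (\<forall>j. min p q < j \<and> j < max p q \<longrightarrow> j \<notin> A)"
proof -
  have *: "(\<forall>j. min p q < j \<and> j < max p q \<longrightarrow> wd m A ! j \<noteq> 1) \<longleftrightarrow>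
           (\<forall>j. min p q < j \<and> j < max p q \<longrightarrow> j \<notin> A)" if "p < m" "q < m"
  proof -
    have "wd m A ! j \<noteq> 1 \<longleftrightarrow> j \<notin> A" if "j < max p q" for j
      using that \<open>p < m\<close> \<open>q < m\<close> by simp
    then show ?thesis by blast
  qed
  show ?thesis unfolding htrans_def using * by (cases "p < m \<and> q < m") auto
qed

lemma swap_wd: "p \<in> A \<Longrightarrow> q \<notin> A \<Longrightarrow> p < m \<Longrightarrow> q < m \<Longrightarrow>
   swap_pos (wd m A) p q = wd m (insert q (A - {p}))"
  unfolding swap_pos_def by (rule nth_equalityI) (auto simp: nth_list_update)

lemma wd_append: "wd (a + b) A = wd a A @ wd b ((\<lambda>x. x - a) ` (A \<inter> {a..}))"
proof (rule nth_equalityI)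
  fix i assume "i < length (wd (a + b) A)"
  then have i: "i < a + b" by simp
  show "wd (a + b) A ! i = (wd a A @ wd b ((\<lambda>x. x - a) ` (A \<inter> {a..}))) ! i"
  proof (cases "i < a")
    case True then show ?thesis using i by (simp add: nth_append)
  next
    case False
    have "i - a \<in> (\<lambda>x. x - a) ` (A \<inter> {a..}) \<longleftrightarrow> i \<in> A"
    proof
      assume "i - a \<in> (\<lambda>x. x - a) ` (A \<inter> {a..})"
      then obtain y where "y \<in> A" "y \<ge> a" "i - a = y - a" by auto
      then have "y = i" using False by arith
      then show "i \<in> A" using \<open>y \<in> A\<close> by simp
    next
      assume "i \<in> A" then show "i - a \<in> (\<lambda>x. x - a) ` (A \<inter> {a..})" using False by force
    qed
    then show ?thesis using i False by (simp add: nth_append)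
  qed
qed simp

lemma step_none: "cands S L = {} \<Longrightarrow> greedy_step S L = L"
  unfolding greedy_step_def by simp

lemma step_some:
  assumes "(p,q) \<in> cands S L" "\<And>p' q'. (p',q') \<in> cands S L \<Longrightarrow> p \<le> p'"
    "\<And>q'. (p,q') \<in> cands S L \<Longrightarrow> q \<le> q'"
  shows "greedy_step S L = L @ [swap_pos (last L) p q]"
proof -
  have 1: "(LEAST p. \<exists>q. (p,q) \<in> cands S L) = p"
    by (rule Least_equality) (use assms in auto)
  have 2: "(LEAST q. (p,q) \<in> cands S L) = q"
    by (rule Least_equality) (use assms in auto)
  show ?thesis using assms(1) unfolding greedy_step_def Let_def 1 2 by auto
qed

lemma step_cases: "greedy_step S L = L \<or> (\<exists>p q. (p,q) \<in> cands S L \<and>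
   greedy_step S L = L @ [swap_pos (last L) p q])"
proof (cases "cands S L = {}")
  case True then show ?thesis by (simp add: step_none)
next
  case False
  define p where "p = (LEAST p. \<exists>q. (p,q) \<in> cands S L)"
  define q where "q = (LEAST q. (p,q) \<in> cands S L)"
  have "\<exists>p q. (p,q) \<in> cands S L" using False by auto
  then have "\<exists>q. (p,q) \<in> cands S L" unfolding p_def by (rule LeastI_ex)
  then have pq: "(p,q) \<in> cands S L" unfolding q_def by (rule LeastI_ex)
  have "greedy_step S L = L @ [swap_pos (last L) p q]"
    using False unfolding greedy_step_def Let_def p_def q_def by simp
  then show ?thesis using pq by blast
qed

lemma step_fix_iff: "greedy_step S L = L \<longleftrightarrow> cands S L = {}"
proof
  assume h: "greedy_step S L = L"
  show "cands S L = {}"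
  proof (rule ccontr)
    assume "cands S L \<noteq> {}"
    then have "greedy_step S L = L @ [swap_pos (last L) (LEAST p. \<exists>q. (p,q) \<in> cands S L)
       (LEAST q. ((LEAST p. \<exists>q. (p,q) \<in> cands S L),q) \<in> cands S L)]"
      unfolding greedy_step_def Let_def by simp
    then show False using h by simp
  qed
qed (rule step_none)

lemma step_props: "greedy_step S L = L \<or> (\<exists>x. greedy_step S L = L @ [x] \<and> x \<in> S \<and> x \<notin> set L)"
  using step_cases[of S L] unfolding cands_def by auto

lemma iter_fix: "greedy_step S ((greedy_step S ^^ i) x) = (greedy_step S ^^ i) x \<Longrightarrow>
   (greedy_step S ^^ (i + d)) x = (greedy_step S ^^ i) x"
  by (induction d) auto

lemma iter_notfix_len: "greedy_step S ((greedy_step S ^^ i) x) \<noteq> (greedy_step S ^^ i) x \<Longrightarrow>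
   length ((greedy_step S ^^ i) x) = length x + i"
proof (induction i)
  case 0 then show ?case by simp
next
  case (Suc i)
  have nf: "greedy_step S ((greedy_step S ^^ i) x) \<noteq> (greedy_step S ^^ i) x"
  proof
    assume h: "greedy_step S ((greedy_step S ^^ i) x) = (greedy_step S ^^ i) x"
    then have "(greedy_step S ^^ Suc i) x = (greedy_step S ^^ i) x" by simp
    then show False using Suc.prems h by simp
  qed
  then obtain y where "greedy_step S ((greedy_step S ^^ i) x) = (greedy_step S ^^ i) x @ [y]"
    using step_props[of S "(greedy_step S ^^ i) x"] by auto
  then show ?case using Suc.IH[OF nf] by simp
qed

lemma iter_props: "set x \<subseteq> S \<Longrightarrow> distinct x \<Longrightarrow>
   set ((greedy_step S ^^ i) x) \<subseteq> S \<and> distinct ((greedy_step S ^^ i) x)"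
proof (induction i)
  case 0 then show ?case by simp
next
  case (Suc i)
  then show ?case using step_props[of S "(greedy_step S ^^ i) x"] by auto
qed

lemma iter_prefix: "\<exists>ys. (greedy_step S ^^ i) x = x @ ys"
proof (induction i)
  case 0 then show ?case by simp
next
  case (Suc i)
  then obtain ys where ys: "(greedy_step S ^^ i) x = x @ ys" by blast
  show ?case using step_props[of S "(greedy_step S ^^ i) x"]
  proof
    assume "greedy_step S ((greedy_step S ^^ i) x) = (greedy_step S ^^ i) x"
    then show ?thesis using ys by simp
  next
    assume "\<exists>z. greedy_step S ((greedy_step S ^^ i) x) = (greedy_step S ^^ i) x @ [z] \<and> z \<in> S \<and> z \<notin> set ((greedy_step S ^^ i) x)"
    then obtain z where "greedy_step S ((greedy_step S ^^ i) x) = (greedy_step S ^^ i) x @ [z]" by blast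
    then show ?thesis using ys by simp
  qed
qed

lemma greedy_fix:
  assumes "finite S" "a \<in> S"
  shows "greedy_step S (greedy S a) = greedy S a"
proof (rule ccontr)
  assume h: "greedy_step S (greedy S a) \<noteq> greedy S a"
  have "length (greedy S a) = 1 + card S"
    using iter_notfix_len[of S "card S" "[a]"] h unfolding greedy_def by simp
  moreover have "set (greedy S a) \<subseteq> S" "distinct (greedy S a)"
    using iter_props[of "[a]" S "card S"] assms unfolding greedy_def by auto
  then have "length (greedy S a) \<le> card S"
    using card_mono[OF assms(1)] distinct_card by metis
  ultimately show False by simp
qed

definition runs :: "nat list set \<Rightarrow> nat list list \<Rightarrow> nat list list \<Rightarrow> bool" where
  "runs S L L' \<longleftrightarrow> (\<exists>i. (greedy_step S ^^ i) L = L')"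

lemma runs_refl: "runs S L L" unfolding runs_def by (rule exI[of _ 0]) simp

lemma runs_trans: "runs S L1 L2 \<Longrightarrow> runs S L2 L3 \<Longrightarrow> runs S L1 L3"
  unfolding runs_def by (metis funpow_add comp_apply)

lemma runs_step: "greedy_step S L = L' \<Longrightarrow> runs S L L'"
  unfolding runs_def by (rule exI[of _ 1]) simp

lemma runs_prefix: "runs S L L' \<Longrightarrow> \<exists>ys. L' = L @ ys"
  unfolding runs_def using iter_prefix by blast

lemma greedy_eq:
  assumes "finite S" "a \<in> S" "runs S [a] L" "cands S L = {}"
  shows "greedy S a = L"
proof -
  obtain i where i: "(greedy_step S ^^ i) [a] = L" using assms(3) unfolding runs_def by blast
  have fL: "greedy_step S ((greedy_step S ^^ i) [a]) = (greedy_step S ^^ i) [a]"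
    using i assms(4) step_none by simp
  have fG: "greedy_step S ((greedy_step S ^^ card S) [a]) = (greedy_step S ^^ card S) [a]"
    using greedy_fix[OF assms(1,2)] unfolding greedy_def .
  have "(greedy_step S ^^ (i + card S)) [a] = L" using iter_fix[OF fL] i by simp
  moreover have "(greedy_step S ^^ (card S + i)) [a] = greedy S a"
    using iter_fix[OF fG] unfolding greedy_def by simp
  ultimately show ?thesis by (simp add: add.commute)
qed

lemma greedy_stuck: "finite S \<Longrightarrow> a \<in> S \<Longrightarrow> cands S (greedy S a) = {}"
  using step_fix_iff[THEN iffD1, OF greedy_fix] .

lemma greedy_effective:
  assumes "finite S" "a \<in> S"
  shows "\<exists>j. greedy S a = (greedy_step S ^^ j) [a] \<and>
     (\<forall>i<j. cands S ((greedy_step S ^^ i) [a]) \<noteq> {})"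
proof -
  let ?f = "greedy_step S"
  have ex: "\<exists>j. ?f ((?f ^^ j) [a]) = (?f ^^ j) [a]"
    using greedy_fix[OF assms] unfolding greedy_def by blast
  define j where "j = (LEAST j. ?f ((?f ^^ j) [a]) = (?f ^^ j) [a])"
  have fj: "?f ((?f ^^ j) [a]) = (?f ^^ j) [a]" unfolding j_def using LeastI_ex[OF ex] .
  have nf: "\<forall>i<j. cands S ((?f ^^ i) [a]) \<noteq> {}"
  proof (intro allI impI)
    fix i assume "i < j"
    then have "\<not> ?f ((?f ^^ i) [a]) = (?f ^^ i) [a]"
      using not_less_Least[of i "\<lambda>j. ?f ((?f ^^ j) [a]) = (?f ^^ j) [a]"] unfolding j_def by blast
    then show "cands S ((?f ^^ i) [a]) \<noteq> {}" using step_fix_iff by blast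
  qed
  have fG: "?f ((?f ^^ card S) [a]) = (?f ^^ card S) [a]"
    using greedy_fix[OF assms] unfolding greedy_def .
  have "(?f ^^ (j + card S)) [a] = (?f ^^ j) [a]" using iter_fix[OF fj] .
  moreover have "(?f ^^ (card S + j)) [a] = greedy S a" using iter_fix[OF fG] unfolding greedy_def by simp
  ultimately have "greedy S a = (?f ^^ j) [a]" by (simp add: add.commute)
  then show ?thesis using nf by blast
qed

lemma swap_length[simp]: "length (swap_pos w p q) = length w"
  unfolding swap_pos_def by simp

lemma htrans_append: "p < length v \<Longrightarrow> q < length v \<Longrightarrow> htrans (v @ s) p q \<longleftrightarrow> htrans v p q"
  unfolding htrans_def by (auto simp: nth_append)

lemma swap_append: "p < length v \<Longrightarrow> q < length v \<Longrightarrow> swap_pos (v @ s) p q = swap_pos v p q @ s"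
  unfolding swap_pos_def by (simp add: nth_append list_update_append)

lemma htrans_lt: "htrans v p q \<Longrightarrow> p < length v \<and> q < length v"
  unfolding htrans_def by simp

locale simul =
  fixes S S' :: "nat list set" and l :: nat and sfx :: "nat list"
  assumes memb: "\<And>v. length v = l \<Longrightarrow> v @ sfx \<in> S \<longleftrightarrow> v \<in> S'"
    and lenS': "\<And>v. v \<in> S' \<Longrightarrow> length v = l"
    and blockq: "\<And>v p q. v \<in> S' \<Longrightarrow> p < l \<Longrightarrow> htrans (v @ sfx) p q \<Longrightarrow>
                    swap_pos (v @ sfx) p q \<in> S \<Longrightarrow> q < l"
begin

definition emb :: "nat list \<Rightarrow> nat list" where "emb v = v @ sfx"

lemma sim_cands:
  assumes L0: "\<And>w. w \<in> set L0 \<Longrightarrow> w \<notin> emb ` S'"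
    and ne: "L' \<noteq> []" and sub: "set L' \<subseteq> S'" and p: "p < l"
  shows "(p,q) \<in> cands S (L0 @ map emb L') \<longleftrightarrow> (p,q) \<in> cands S' L'"
proof -
  define v where "v = last L'"
  have v: "v \<in> S'" using ne sub unfolding v_def by auto
  have lv: "length v = l" using lenS'[OF v] .
  have lastL: "last (L0 @ map emb L') = v @ sfx" using ne unfolding v_def emb_def by (simp add: last_map)
  have injemb: "emb x = emb y \<longleftrightarrow> x = y" for x y unfolding emb_def by simp
  show ?thesis
  proof
    assume "(p,q) \<in> cands S (L0 @ map emb L')"
    then have h: "htrans (v @ sfx) p q" "swap_pos (v @ sfx) p q \<in> S"
       "swap_pos (v @ sfx) p q \<notin> set (L0 @ map emb L')"
      unfolding cands_def lastL by auto
    have q: "q < l" using blockq[OF v p h(1,2)] .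
    have sw: "swap_pos (v @ sfx) p q = swap_pos v p q @ sfx" using swap_append p q lv by simp
    have 1: "htrans v p q" using h(1) htrans_append p q lv by simp
    have 2: "swap_pos v p q \<in> S'" using h(2) sw memb[of "swap_pos v p q"] lv by simp
    have 3: "swap_pos v p q \<notin> set L'" using h(3) sw unfolding emb_def by auto
    show "(p,q) \<in> cands S' L'" unfolding cands_def v_def[symmetric] using 1 2 3 by simp
  next
    assume "(p,q) \<in> cands S' L'"
    then have h: "htrans v p q" "swap_pos v p q \<in> S'" "swap_pos v p q \<notin> set L'"
      unfolding cands_def v_def by auto
    have q: "q < l" using htrans_lt[OF h(1)] lv by simp
    have sw: "swap_pos (v @ sfx) p q = swap_pos v p q @ sfx" using swap_append p q lv by simp
    have 1: "htrans (v @ sfx) p q" using h(1) htrans_append p q lv by simp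
    have 2: "swap_pos (v @ sfx) p q \<in> S" using h(2) sw memb[of "swap_pos v p q"] lv by simp
    have 3: "swap_pos (v @ sfx) p q \<notin> set L0" using L0 h(2) sw unfolding emb_def by auto
    have 4: "swap_pos (v @ sfx) p q \<notin> set (map emb L')" using h(3) sw unfolding emb_def by auto
    show "(p,q) \<in> cands S (L0 @ map emb L')" unfolding cands_def lastL using 1 2 3 4 by simp
  qed
qed

lemma sim_stuck:
  assumes "\<And>w. w \<in> set L0 \<Longrightarrow> w \<notin> emb ` S'" "L' \<noteq> []" "set L' \<subseteq> S'"
    "cands S' L' = {}" "(p,q) \<in> cands S (L0 @ map emb L')"
  shows "l \<le> p"
  using sim_cands[OF assms(1,2,3), where p=p and q=q] assms(4,5) by (cases "p < l") auto

lemma sim_step: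
  assumes L0: "\<And>w. w \<in> set L0 \<Longrightarrow> w \<notin> emb ` S'" and ne: "L' \<noteq> []" and sub: "set L' \<subseteq> S'"
    and c: "cands S' L' \<noteq> {}"
  shows "greedy_step S (L0 @ map emb L') = L0 @ map emb (greedy_step S' L')"
proof -
  define p where "p = (LEAST p. \<exists>q. (p,q) \<in> cands S' L')"
  define q where "q = (LEAST q. (p,q) \<in> cands S' L')"
  have "\<exists>p q. (p,q) \<in> cands S' L'" using c by auto
  then have "\<exists>q. (p,q) \<in> cands S' L'" unfolding p_def by (rule LeastI_ex)
  then have pq: "(p,q) \<in> cands S' L'" unfolding q_def by (rule LeastI_ex)
  have pmin: "p \<le> p'" if "(p',q') \<in> cands S' L'" for p' q'
    unfolding p_def using that by (blast intro: Least_le)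
  have qmin: "q \<le> q'" if "(p,q') \<in> cands S' L'" for q'
    unfolding q_def using that by (blast intro: Least_le)
  have vS: "last L' \<in> S'" using ne sub by auto
  have pl: "p < l" using pq htrans_lt lenS'[OF vS] unfolding cands_def by fastforce
  have ql: "q < l" using pq htrans_lt lenS'[OF vS] unfolding cands_def by fastforce
  have s1: "greedy_step S' L' = L' @ [swap_pos (last L') p q]"
    by (rule step_some[OF pq]) (auto intro: pmin qmin)
  have fpq: "(p,q) \<in> cands S (L0 @ map emb L')" using sim_cands[OF L0 ne sub pl] pq by simp
  have "greedy_step S (L0 @ map emb L') = (L0 @ map emb L') @ [swap_pos (last (L0 @ map emb L')) p q]"
  proof (rule step_some[OF fpq])
    fix p' q' assume h: "(p',q') \<in> cands S (L0 @ map emb L')"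
    show "p \<le> p'"
    proof (cases "p' < l")
      case True then show ?thesis using sim_cands[OF L0 ne sub True] h pmin by blast
    qed (use pl in simp)
  next
    fix q' assume "(p,q') \<in> cands S (L0 @ map emb L')"
    then show "q \<le> q'" using sim_cands[OF L0 ne sub pl] qmin by blast
  qed
  moreover have "last (L0 @ map emb L') = last L' @ sfx" using ne unfolding emb_def by (simp add: last_map)
  moreover have "swap_pos (last L' @ sfx) p q = swap_pos (last L') p q @ sfx"
    using swap_append pl ql lenS'[OF vS] by simp
  ultimately show ?thesis using s1 unfolding emb_def by simp
qed

lemma sim_run:
  assumes fin: "finite S'" and v0: "v0 \<in> S'" and L0: "\<And>w. w \<in> set L0 \<Longrightarrow> w \<notin> emb ` S'"
  shows "runs S (L0 @ [emb v0]) (L0 @ map emb (greedy S' v0))"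
proof -
  obtain j where j: "greedy S' v0 = (greedy_step S' ^^ j) [v0]"
    "\<forall>i<j. cands S' ((greedy_step S' ^^ i) [v0]) \<noteq> {}"
    using greedy_effective[OF fin v0] by blast
  have "i \<le> j \<Longrightarrow> (greedy_step S ^^ i) (L0 @ [emb v0]) = L0 @ map emb ((greedy_step S' ^^ i) [v0])" for i
  proof (induction i)
    case 0 then show ?case by simp
  next
    case (Suc i)
    have ne: "(greedy_step S' ^^ i) [v0] \<noteq> []" using iter_prefix[where S=S' and i=i and x="[v0]"] by auto
    have sub: "set ((greedy_step S' ^^ i) [v0]) \<subseteq> S'" using iter_props[of "[v0]" S' i] v0 by simp
    have c: "cands S' ((greedy_step S' ^^ i) [v0]) \<noteq> {}" using j(2) Suc.prems by simp
    show ?case using Suc.IH Suc.prems sim_step[OF L0 ne sub c] by simp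
  qed
  then show ?thesis unfolding runs_def using j(1) by auto
qed

end

definition sparse :: "nat set \<Rightarrow> bool" where "sparse A \<longleftrightarrow> (\<forall>i\<in>A. Suc i \<notin> A)"

definition good :: "nat \<Rightarrow> nat \<Rightarrow> nat set \<Rightarrow> bool" where
  "good m k A \<longleftrightarrow> (\<forall>i\<in>A. Suc i < m) \<and> card A = k \<and> sparse A"

definition H :: "nat \<Rightarrow> nat \<Rightarrow> nat list set" where
  "H m k = wd m ` {A. good m k A}"

definition Ck :: "nat \<Rightarrow> nat \<Rightarrow> nat set" where
  "Ck x k = (\<lambda>j. x + 2*j) ` {..<k}"

lemma good_sub: "good m k A \<Longrightarrow> A \<subseteq> {..<m}"
  unfolding good_def by auto

lemma H_finite: "finite (H m k)"
proof -
  have "{A. good m k A} \<subseteq> Pow {..<m}" using good_sub by blast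
  moreover have "finite (Pow {..<m::nat})" by simp
  ultimately have "finite {A. good m k A}" by (rule finite_subset)
  then show ?thesis unfolding H_def by simp
qed

lemma H_mem: assumes "A \<subseteq> {..<m}" shows "wd m A \<in> H m k \<longleftrightarrow> good m k A"
proof
  assume "wd m A \<in> H m k"
  then obtain B where B: "good m k B" "wd m A = wd m B" unfolding H_def by auto
  then have "A = B" using wd_inj[OF assms good_sub[OF B(1)]] by simp
  then show "good m k A" using B by simp
qed (auto simp: H_def)

lemma H_elem: "w \<in> H m k \<Longrightarrow> \<exists>A. w = wd m A \<and> good m k A"
  unfolding H_def by auto

lemma H_len: "w \<in> H m k \<Longrightarrow> length w = m"
  unfolding H_def by auto

lemma Ck_mem: "y \<in> Ck x k \<longleftrightarrow> x \<le> y \<and> y < x + 2*k \<and> (even y = even x)"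
proof
  assume "y \<in> Ck x k"
  then obtain j where "j < k" "y = x + 2*j" unfolding Ck_def by auto
  then show "x \<le> y \<and> y < x + 2*k \<and> (even y = even x)" by simp
next
  assume h: "x \<le> y \<and> y < x + 2*k \<and> (even y = even x)"
  then have "even (y - x)" by presburger
  then obtain j where "y - x = 2*j" by (rule evenE)
  then have "y = x + 2*j" "j < k" using h by auto
  then show "y \<in> Ck x k" unfolding Ck_def by auto
qed

lemma Ck_0[simp]: "Ck x 0 = {}" unfolding Ck_def by simp

lemma Ck_Suc: "Ck x (Suc k) = insert (x + 2*k) (Ck x k)"
  unfolding Ck_def by (auto simp: lessThan_Suc)

lemma Ck_card: "card (Ck x k) = k"
  unfolding Ck_def by (subst card_image) (auto simp: inj_on_def)

lemma Ck_finite[simp]: "finite (Ck x k)" unfolding Ck_def by simp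

lemma even_lt2: "even (d::nat) \<Longrightarrow> d < 2*k \<Longrightarrow> Suc d < 2*k" by presburger

lemma Ck_Suc_lt: "y \<in> Ck x k \<Longrightarrow> Suc y < x + 2*k"
  unfolding Ck_mem by presburger

lemma Ck_sparse: "sparse (Ck x k)"
  unfolding sparse_def
proof (intro ballI notI)
  fix i assume "i \<in> Ck x k" "Suc i \<in> Ck x k"
  then have "even i = even x" "even (Suc i) = even x" unfolding Ck_mem by blast+
  then show False by simp
qed

lemma Ck_good: "x + 2*k \<le> m \<Longrightarrow> good m k (Ck x k)"
  unfolding good_def using Ck_Suc_lt Ck_sparse Ck_card by fastforce

lemma Ck_inj: "0 < k \<Longrightarrow> Ck x k = Ck y k \<longleftrightarrow> x = y"
proof
  assume "0 < k" "Ck x k = Ck y k"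
  moreover have "x \<in> Ck x k" "y \<in> Ck y k" using \<open>0 < k\<close> by (auto simp: Ck_mem)
  ultimately have "x \<in> Ck y k" "y \<in> Ck x k" by auto
  then show "x = y" unfolding Ck_mem by linarith
qed simp

lemma good_card_bound: "good P k B \<Longrightarrow> 2*k \<le> P"
proof (induction k arbitrary: B P)
  case 0 then show ?case by simp
next
  case (Suc k)
  have g1: "\<forall>i\<in>B. Suc i < P" and cB: "card B = Suc k" and sp: "sparse B"
    using Suc.prems unfolding good_def by blast+
  have fin: "finite B" using cB by (intro card_ge_0_finite) simp
  have ne: "B \<noteq> {}" using cB by auto
  define b where "b = Max B"
  have bB: "b \<in> B" using fin ne unfolding b_def by simp
  have sb: "Suc b < P" using bB g1 by blast
  have g2: "\<forall>i\<in>B - {b}. Suc i < b"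
  proof
    fix i assume i: "i \<in> B - {b}"
    then have "i \<le> b" "i \<noteq> b" using fin unfolding b_def by (auto intro: Max_ge)
    moreover have "Suc i \<noteq> b" using i bB sp unfolding sparse_def by blast
    ultimately show "Suc i < b" by simp
  qed
  have c2: "card (B - {b}) = k" using cB bB fin by simp
  have s2: "sparse (B - {b})" using sp unfolding sparse_def by blast
  have "good b k (B - {b})" unfolding good_def using g2 c2 s2 by blast
  then have "2*k \<le> b" by (rule Suc.IH)
  then show ?case using sb by simp
qed

lemma wd_take: "l \<le> m \<Longrightarrow> take l (wd m A) = wd l A"
  unfolding wd_def by (simp add: take_map)

lemma wd_insert_append: "B \<subseteq> {..<l} \<Longrightarrow> l < m \<Longrightarrow>
    wd l B @ wd (m - l) {0} = wd m (insert l B)"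
  by (rule nth_equalityI) (auto simp: nth_append)

lemma wd_snoc0: "A \<subseteq> {..<n} \<Longrightarrow> wd n A @ [0] = wd (Suc n) A"
  by (rule nth_equalityI) (auto simp: nth_append nth_Cons split: nat.splits)

lemma wd_split:
  assumes A: "A \<subseteq> {..<m}" and l: "l < m" and eq: "wd m A = v @ wd (m - l) {0}" and lv: "length v = l"
  shows "A = insert l (A \<inter> {..<l}) \<and> v = wd l (A \<inter> {..<l})"
proof -
  have "v = take l (wd m A)" using eq lv by simp
  also have "\<dots> = wd l A" using l by (simp add: wd_take)
  also have "\<dots> = wd l (A \<inter> {..<l})" by (rule wd_cong) auto
  finally have v: "v = wd l (A \<inter> {..<l})" .
  have "wd m A = wd m (insert l (A \<inter> {..<l}))"
    using eq v wd_insert_append[of "A \<inter> {..<l}" l m] l by auto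
  then have "A = insert l (A \<inter> {..<l})" using wd_inj[of A m "insert l (A \<inter> {..<l})"] A l by auto
  then show ?thesis using v by simp
qed

locale stp =
  fixes \<kappa> m :: nat
  assumes mk: "2 * Suc \<kappa> \<le> m"
begin

definition "M = m - 2 * Suc \<kappa>"
definition lc :: "nat \<Rightarrow> nat" where "lc c = 2*\<kappa> + c"
definition "S = H m (Suc \<kappa>)"
definition S' :: "nat \<Rightarrow> nat list set" where "S' c = H (lc c) \<kappa>"
definition sfx :: "nat \<Rightarrow> nat list" where "sfx c = wd (m - lc c) {0}"
definition embc :: "nat \<Rightarrow> nat list \<Rightarrow> nat list" where "embc c v = v @ sfx c"
definition slice :: "nat \<Rightarrow> nat list set" where "slice c = embc c ` S' c"
definition Cw :: "nat \<Rightarrow> nat \<Rightarrow> nat list" where "Cw c x = wd m (insert (lc c) (Ck x \<kappa>))"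

lemma lc_lt: "c \<le> M \<Longrightarrow> Suc (lc c) < m"
  using mk unfolding M_def lc_def by simp

lemma embc_wd: "c \<le> M \<Longrightarrow> B \<subseteq> {..<lc c} \<Longrightarrow> embc c (wd (lc c) B) = wd m (insert (lc c) B)"
  unfolding embc_def sfx_def using wd_insert_append lc_lt by (metis Suc_lessD)

lemma good_insert:
  assumes c: "c \<le> M" and g: "good (lc c) \<kappa> B"
  shows "good m (Suc \<kappa>) (insert (lc c) B)"
proof -
  have sub: "B \<subseteq> {..<lc c}" using good_sub[OF g] .
  have fin: "finite B" using sub finite_subset by blast
  have nB: "lc c \<notin> B" using sub by auto
  have lt: "Suc (lc c) < m" using lc_lt[OF c] .
  show ?thesis unfolding good_def
  proof (intro conjI)
    show "\<forall>i\<in>insert (lc c) B. Suc i < m" using g lt unfolding good_def by auto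
    show "card (insert (lc c) B) = Suc \<kappa>" using g fin nB unfolding good_def by simp
    show "sparse (insert (lc c) B)" using g sub unfolding good_def sparse_def by auto
  qed
qed

lemma slice_wd: assumes c: "c \<le> M"
  shows "w \<in> slice c \<longleftrightarrow> (\<exists>B. good (lc c) \<kappa> B \<and> w = wd m (insert (lc c) B))"
proof
  assume "w \<in> slice c"
  then obtain B where "good (lc c) \<kappa> B" "w = embc c (wd (lc c) B)" unfolding slice_def S'_def H_def by blast
  then show "\<exists>B. good (lc c) \<kappa> B \<and> w = wd m (insert (lc c) B)" using embc_wd[OF c good_sub] by metis
next
  assume "\<exists>B. good (lc c) \<kappa> B \<and> w = wd m (insert (lc c) B)"
  then obtain B where B: "good (lc c) \<kappa> B" "w = wd m (insert (lc c) B)" by blast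
  then have "w = embc c (wd (lc c) B)" using embc_wd[OF c good_sub[OF B(1)]] by simp
  moreover have "wd (lc c) B \<in> S' c" unfolding S'_def H_def using B(1) by blast
  ultimately show "w \<in> slice c" unfolding slice_def by blast
qed

lemma slice_sub: "c \<le> M \<Longrightarrow> slice c \<subseteq> S"
proof
  fix w assume c: "c \<le> M" and "w \<in> slice c"
  then obtain B where B: "good (lc c) \<kappa> B" "w = wd m (insert (lc c) B)" using slice_wd by blast
  have "insert (lc c) B \<subseteq> {..<m}" using good_sub[OF B(1)] lc_lt[OF c] by auto
  then show "w \<in> S" unfolding S_def B(2) using H_mem good_insert[OF c B(1)] by blast
qed

lemma slice_disj:
  assumes c: "c \<le> M" and d: "d \<le> M" and ne: "c \<noteq> d"
  shows "slice c \<inter> slice d = {}"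
proof (rule ccontr)
  assume "slice c \<inter> slice d \<noteq> {}"
  then obtain w where "w \<in> slice c" "w \<in> slice d" by blast
  then have w1: "\<exists>B. good (lc c) \<kappa> B \<and> w = wd m (insert (lc c) B)"
    and w2: "\<exists>B. good (lc d) \<kappa> B \<and> w = wd m (insert (lc d) B)"
    using slice_wd[OF c] slice_wd[OF d] by blast+
  obtain B where B: "good (lc c) \<kappa> B" "w = wd m (insert (lc c) B)" using w1 by blast
  obtain B' where B': "good (lc d) \<kappa> B'" "w = wd m (insert (lc d) B')" using w2 by blast
  have s1: "insert (lc c) B \<subseteq> {..<m}" using good_sub[OF B(1)] lc_lt[OF c] by auto
  have s2: "insert (lc d) B' \<subseteq> {..<m}" using good_sub[OF B'(1)] lc_lt[OF d] by auto
  have eq: "insert (lc c) B = insert (lc d) B'" using wd_inj[OF s1 s2] B(2) B'(2) by simp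
  have "lc c \<noteq> lc d" using ne unfolding lc_def by simp
  have "lc c \<in> insert (lc d) B'" "lc d \<in> insert (lc c) B" using eq by (metis insertI1)+
  then have "lc c \<in> B'" "lc d \<in> B" using \<open>lc c \<noteq> lc d\<close> by auto
  then have "lc c < lc d" "lc d < lc c" using good_sub[OF B(1)] good_sub[OF B'(1)] by auto
  then show False by simp
qed

lemma S_cover: "S = (\<Union>c\<in>{..M}. slice c)"
proof
  show "(\<Union>c\<in>{..M}. slice c) \<subseteq> S" using slice_sub by blast
next
  show "S \<subseteq> (\<Union>c\<in>{..M}. slice c)"
  proof
    fix w assume "w \<in> S"
    then obtain A where A: "w = wd m A" "good m (Suc \<kappa>) A" unfolding S_def using H_elem by blast
    have g1: "\<forall>i\<in>A. Suc i < m" and cA: "card A = Suc \<kappa>" and sp: "sparse A"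
      using A(2) unfolding good_def by blast+
    have fin: "finite A" using cA by (intro card_ge_0_finite) simp
    have ne: "A \<noteq> {}" using cA by auto
    define P where "P = Max A"
    have PA: "P \<in> A" using fin ne unfolding P_def by simp
    define B where "B = A - {P}"
    have gB: "good P \<kappa> B" unfolding good_def
    proof (intro conjI ballI)
      fix i assume i: "i \<in> B"
      then have "i \<le> P" "i \<noteq> P" using fin unfolding B_def P_def by (auto intro: Max_ge)
      moreover have "Suc i \<noteq> P" using i PA sp unfolding sparse_def B_def by (metis DiffD1)
      ultimately show "Suc i < P" by simp
    next
      show "card B = \<kappa>" using cA PA fin unfolding B_def by simp
    next
      show "sparse B" using sp unfolding sparse_def B_def by blast
    qed
    have P2: "2*\<kappa> \<le> P" using good_card_bound[OF gB] .
    define c where "c = P - 2*\<kappa>"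
    have lcP: "lc c = P" using P2 unfolding c_def lc_def by simp
    have "Suc P < m" using g1 PA by blast
    then have cM: "c \<le> M" unfolding c_def M_def using P2 by simp
    have "A = insert P B" using insert_Diff[OF PA] unfolding B_def by simp
    then have "w = wd m (insert (lc c) B)" using A(1) lcP by simp
    then have "\<exists>B'. good (lc c) \<kappa> B' \<and> w = wd m (insert (lc c) B')" using gB lcP by (intro exI[of _ B]) simp
    then have "w \<in> slice c" unfolding slice_wd[OF cM] .
    then show "w \<in> (\<Union>c\<in>{..M}. slice c)" using cM by blast
  qed
qed

lemma simul_c: assumes c: "c \<le> M" shows "simul S (S' c) (lc c) (sfx c)"
proof (rule simul.intro)
  fix v :: "nat list" assume lv: "length v = lc c"
  show "v @ sfx c \<in> S \<longleftrightarrow> v \<in> S' c"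
  proof
    assume "v @ sfx c \<in> S"
    then obtain A where A: "v @ sfx c = wd m A" "good m (Suc \<kappa>) A" unfolding S_def using H_elem by blast
    have As: "A \<subseteq> {..<m}" using good_sub[OF A(2)] .
    have lt: "lc c < m" using lc_lt[OF c] by simp
    have spl: "A = insert (lc c) (A \<inter> {..<lc c}) \<and> v = wd (lc c) (A \<inter> {..<lc c})"
      by (rule wd_split[OF As lt]) (use A(1) lv in \<open>auto simp: sfx_def\<close>)
    define B where "B = A \<inter> {..<lc c}"
    have AB: "A = insert (lc c) B" and vB: "v = wd (lc c) B" using spl unfolding B_def by auto
    have g1: "\<forall>i\<in>A. Suc i < m" and cA: "card A = Suc \<kappa>" and sp: "sparse A"
      using A(2) unfolding good_def by blast+
    have fin: "finite A" using cA by (intro card_ge_0_finite) simp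
    have gB: "good (lc c) \<kappa> B" unfolding good_def
    proof (intro conjI ballI)
      fix i assume i: "i \<in> B"
      have il: "i < lc c" using i unfolding B_def by simp
      have lA: "lc c \<in> A" using AB by simp
      have iA: "i \<in> A" using i unfolding B_def by simp
      have "Suc i \<noteq> lc c" using lA iA sp unfolding sparse_def by metis
      then show "Suc i < lc c" using il by simp
    next
      have nB: "lc c \<notin> B" unfolding B_def by simp
      have fB: "finite B" using fin unfolding B_def by simp
      have "card A = Suc (card B)" using AB nB fB by simp
      then show "card B = \<kappa>" using cA by simp
    next
      show "sparse B" using sp unfolding sparse_def B_def by simp
    qed
    show "v \<in> S' c" unfolding S'_def vB using H_mem[OF good_sub[OF gB]] gB by blast
  next
    assume "v \<in> S' c"
    then obtain B where B: "v = wd (lc c) B" "good (lc c) \<kappa> B" unfolding S'_def using H_elem by blast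
    have "v @ sfx c \<in> slice c" unfolding slice_def S'_def embc_def[symmetric] using \<open>v \<in> S' c\<close>
      unfolding S'_def by blast
    then show "v @ sfx c \<in> S" using slice_sub[OF c] by blast
  qed
next
  fix v assume "v \<in> S' c" then show "length v = lc c" unfolding S'_def using H_len by blast
next
  fix v p q assume v: "v \<in> S' c" and p: "p < lc c" and h: "htrans (v @ sfx c) p q"
  have lv: "length v = lc c" using v unfolding S'_def using H_len by blast
  have lt: "0 < m - lc c" using lc_lt[OF c] by simp
  have one: "(v @ sfx c) ! lc c = 1" using lv lt by (simp add: nth_append sfx_def)
  show "q < lc c"
  proof (rule ccontr)
    assume "\<not> q < lc c"
    then have "q = lc c \<or> lc c < q" by auto
    then show False
    proof
      assume "q = lc c" then show False using h one unfolding htrans_def by simp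
    next
      assume "lc c < q"
      then have "min p q < lc c \<and> lc c < max p q" using p by simp
      then show False using h one unfolding htrans_def by blast
    qed
  qed
qed

lemma Cw_embc: "x \<le> c \<Longrightarrow> c \<le> M \<Longrightarrow> Cw c x = embc c (wd (lc c) (Ck x \<kappa>))"
proof -
  assume "x \<le> c" "c \<le> M"
  moreover have "Ck x \<kappa> \<subseteq> {..<lc c}" if "x \<le> c"
    using that Ck_Suc_lt unfolding lc_def by fastforce
  ultimately show ?thesis unfolding Cw_def using embc_wd by simp
qed

lemma Ck_S': "x \<le> c \<Longrightarrow> wd (lc c) (Ck x \<kappa>) \<in> S' c"
  unfolding S'_def using H_mem Ck_good[of x \<kappa> "lc c"] good_sub unfolding lc_def by fastforce

lemma Cw_slice: "x \<le> c \<Longrightarrow> c \<le> M \<Longrightarrow> Cw c x \<in> slice c"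
  unfolding slice_def using Cw_embc Ck_S' by simp

lemma Cw_diag: "Cw c c = wd m (Ck c (Suc \<kappa>))"
  unfolding Cw_def Ck_Suc lc_def by (simp add: add.commute)

lemma Cw_k0: "\<kappa> = 0 \<Longrightarrow> Cw c x = Cw c y"
  unfolding Cw_def by simp

end

context stp begin

lemma greedy_ne: "finite X \<Longrightarrow> a \<in> X \<Longrightarrow> greedy X a \<noteq> [] \<and> set (greedy X a) \<subseteq> X"
  using iter_prefix[where S=X and i="card X" and x="[a]"] iter_props[of "[a]" X "card X"]
  unfolding greedy_def by auto

lemma phase:
  assumes c: "c \<le> M" and v0: "v0 \<in> S' c" and L0: "\<And>w. w \<in> set L0 \<Longrightarrow> w \<notin> slice c"
  shows "runs S (L0 @ [embc c v0]) (L0 @ map (embc c) (greedy (S' c) v0))"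
    "\<And>p q. (p,q) \<in> cands S (L0 @ map (embc c) (greedy (S' c) v0)) \<Longrightarrow> lc c \<le> p"
proof -
  interpret sc: simul S "S' c" "lc c" "sfx c" by (rule simul_c[OF c])
  have e: "sc.emb = embc c" unfolding sc.emb_def embc_def by (rule ext) simp
  have fin: "finite (S' c)" unfolding S'_def by (rule H_finite)
  have L0': "\<And>w. w \<in> set L0 \<Longrightarrow> w \<notin> sc.emb ` S' c" using L0 unfolding e slice_def by blast
  show "runs S (L0 @ [embc c v0]) (L0 @ map (embc c) (greedy (S' c) v0))"
    using sc.sim_run[OF fin v0 L0'] unfolding e .
  fix p q assume "(p,q) \<in> cands S (L0 @ map (embc c) (greedy (S' c) v0))"
  then show "lc c \<le> p"
    using sc.sim_stuck[OF L0' _ _ greedy_stuck[OF fin v0]] greedy_ne[OF fin v0] unfolding e by blast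
qed

lemma Ck_lt: "y \<in> Ck x \<kappa> \<Longrightarrow> y < x + 2*\<kappa>"
  unfolding Ck_mem by simp

lemma cand_char:
  assumes c: "c \<le> M" and x: "x \<le> c" and x0: "\<kappa> = 0 \<longrightarrow> x = 0" and ne: "L \<noteq> []"
    and lastL: "last L = Cw c x" and stuck: "\<forall>p q. (p,q) \<in> cands S L \<longrightarrow> lc c \<le> p"
  shows "(p,q) \<in> cands S L \<longleftrightarrow> p = lc c \<and>
     (\<exists>c'. q = lc c' \<and> x \<le> c' \<and> c' \<le> M \<and> c' \<noteq> c \<and> Cw c' x \<notin> set L)"
proof -
  define A where "A = insert (lc c) (Ck x \<kappa>)"
  have xl: "x + 2*\<kappa> \<le> lc c" using x unfolding lc_def by simp
  have lcm: "lc c < m" using lc_lt[OF c] by simp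
  have CkA: "lc c \<notin> Ck x \<kappa>" using Ck_lt xl by fastforce
  have Asub: "A \<subseteq> {..<m}" unfolding A_def using Ck_lt xl lcm by fastforce
  have wA: "last L = wd m A" using lastL unfolding Cw_def A_def .
  show ?thesis
  proof
    assume pq: "(p,q) \<in> cands S L"
    have p: "lc c \<le> p" using stuck pq by blast
    have h: "htrans (wd m A) p q" "swap_pos (wd m A) p q \<in> S" "swap_pos (wd m A) p q \<notin> set L"
      using pq unfolding cands_def wA by auto
    have ht: "p < m" "q < m" "p \<in> A" "q \<notin> A" "\<And>j. min p q < j \<and> j < max p q \<Longrightarrow> j \<notin> A"
      using h(1) unfolding htrans_wd by auto
    have pl: "p = lc c"
    proof (rule ccontr)
      assume "p \<noteq> lc c"
      then have "p \<in> Ck x \<kappa>" using ht(3) unfolding A_def by simp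
      then show False using Ck_lt xl p by fastforce
    qed
    have AD: "A - {p} = Ck x \<kappa>" unfolding A_def pl using CkA by auto
    have sw: "swap_pos (wd m A) p q = wd m (insert q (Ck x \<kappa>))"
      using swap_wd[OF ht(3) ht(4) ht(1) ht(2)] AD by simp
    have sub2: "insert q (Ck x \<kappa>) \<subseteq> {..<m}" using Asub ht(2) unfolding A_def by auto
    have g: "good m (Suc \<kappa>) (insert q (Ck x \<kappa>))"
      using h(2) sw H_mem[OF sub2] unfolding S_def by simp
    have sq: "Suc q < m" using g unfolding good_def by simp
    have sp: "sparse (insert q (Ck x \<kappa>))" using g unfolding good_def by simp
    have qge: "x + 2*\<kappa> \<le> q"
    proof (rule ccontr)
      assume qlt: "\<not> x + 2*\<kappa> \<le> q"
      then have k0: "\<kappa> \<noteq> 0" using x0 by auto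
      define y where "y = x + 2*\<kappa> - 2"
      have yC: "y \<in> Ck x \<kappa>" unfolding Ck_mem y_def using k0 by presburger
      have yA: "y \<in> A" using yC unfolding A_def by simp
      have "q \<noteq> y" using ht(4) yA by auto
      then have "q < y \<or> q = Suc y" using qlt unfolding y_def by linarith
      then show False
      proof
        assume "q < y"
        moreover have "y < lc c" using xl k0 unfolding y_def by simp
        ultimately have "min p q < y \<and> y < max p q" using pl by simp
        then show False using ht(5) yA by blast
      next
        assume "q = Suc y"
        then show False using sp yC unfolding sparse_def by blast
      qed
    qed
    define c' where "c' = q - 2*\<kappa>"
    have qc: "q = lc c'" unfolding c'_def lc_def using qge by simp
    have "x \<le> c'" unfolding c'_def using qge by simp
    moreover have "c' \<le> M" unfolding c'_def M_def using sq qge mk by simp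
    moreover have "c' \<noteq> c" using ht(4) qc unfolding A_def by auto
    moreover have "Cw c' x \<notin> set L" using h(3) sw qc unfolding Cw_def by simp
    ultimately show "p = lc c \<and> (\<exists>c'. q = lc c' \<and> x \<le> c' \<and> c' \<le> M \<and> c' \<noteq> c \<and> Cw c' x \<notin> set L)"
      using pl qc by blast
  next
    assume "p = lc c \<and> (\<exists>c'. q = lc c' \<and> x \<le> c' \<and> c' \<le> M \<and> c' \<noteq> c \<and> Cw c' x \<notin> set L)"
    then obtain c' where pl: "p = lc c" and qc: "q = lc c'" and c': "x \<le> c'" "c' \<le> M" "c' \<noteq> c"
      and nL: "Cw c' x \<notin> set L" by blast
    have xq: "x + 2*\<kappa> \<le> q" using c' qc unfolding lc_def by simp
    have qm: "q < m" using lc_lt[OF c'(2)] qc by simp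
    have qne: "q \<noteq> lc c" using qc c'(3) unfolding lc_def by simp
    have pA: "p \<in> A" unfolding A_def pl by simp
    have qA: "q \<notin> A" unfolding A_def using qne xq Ck_lt by fastforce
    have btw: "j \<notin> A" if "min p q < j \<and> j < max p q" for j
    proof
      assume jA: "j \<in> A"
      have "j \<noteq> p" using that by auto
      then have "j \<in> Ck x \<kappa>" using jA pl unfolding A_def by simp
      then have "j < x + 2*\<kappa>" by (rule Ck_lt)
      then show False using that xq xl pl by (simp add: min_def max_def split: if_split_asm)
    qed
    have ht: "htrans (wd m A) p q" unfolding htrans_wd using pA qA btw lcm qm pl by blast
    have AD: "A - {p} = Ck x \<kappa>" unfolding A_def pl using CkA by auto
    have sw: "swap_pos (wd m A) p q = Cw c' x"
      using swap_wd[OF pA qA] lcm qm AD pl qc unfolding Cw_def by simp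
    have inS: "Cw c' x \<in> S" using Cw_slice[OF c'(1,2)] slice_sub[OF c'(2)] by blast
    show "(p,q) \<in> cands S L" unfolding cands_def wA using ht sw inS nL by simp
  qed
qed

lemma trans_step:
  assumes c: "c \<le> M" and x: "x \<le> c" and x0: "\<kappa> = 0 \<longrightarrow> x = 0" and ne: "L \<noteq> []"
    and lastL: "last L = Cw c x" and stuck: "\<forall>p q. (p,q) \<in> cands S L \<longrightarrow> lc c \<le> p"
  defines "T \<equiv> {c'. x \<le> c' \<and> c' \<le> M \<and> c' \<noteq> c \<and> Cw c' x \<notin> set L}"
  shows "T = {} \<Longrightarrow> greedy_step S L = L"
    and "T \<noteq> {} \<Longrightarrow> greedy_step S L = L @ [Cw (LEAST c'. c' \<in> T) x]"
proof -
  have ch: "(p,q) \<in> cands S L \<longleftrightarrow> p = lc c \<and> (\<exists>c'\<in>T. q = lc c')" for p q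
    using cand_char[OF c x x0 ne lastL stuck] unfolding T_def by blast
  show "T = {} \<Longrightarrow> greedy_step S L = L"
  proof -
    assume "T = {}"
    then have nc: "\<And>p q. (p,q) \<notin> cands S L" using ch by blast
    have "cands S L = {}"
    proof (rule equals0I)
      fix z assume "z \<in> cands S L"
      then show False using nc[of "fst z" "snd z"] by simp
    qed
    then show ?thesis by (rule step_none)
  qed
  assume T: "T \<noteq> {}"
  define cs where "cs = (LEAST c'. c' \<in> T)"
  obtain t where "t \<in> T" using T by blast
  then have csT: "cs \<in> T" unfolding cs_def by (rule LeastI)
  have csmin: "c' \<in> T \<Longrightarrow> cs \<le> c'" for c' unfolding cs_def by (rule Least_le)
  have pq: "(lc c, lc cs) \<in> cands S L" using ch csT by blast
  have "greedy_step S L = L @ [swap_pos (last L) (lc c) (lc cs)]"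
  proof (rule step_some[OF pq])
    fix p' q' assume "(p',q') \<in> cands S L" then show "lc c \<le> p'" using ch[of p' q'] by simp
  next
    fix q' assume "(lc c, q') \<in> cands S L"
    then obtain c'' where "c'' \<in> T" "q' = lc c''" using ch by blast
    then show "lc cs \<le> q'" using csmin unfolding lc_def by fastforce
  qed
  moreover have "swap_pos (last L) (lc c) (lc cs) = Cw cs x"
  proof -
    have "(lc c, lc cs) \<in> cands S L" by (rule pq)
    have csc: "x \<le> cs" "cs \<le> M" "cs \<noteq> c" using csT unfolding T_def by auto
    define A where "A = insert (lc c) (Ck x \<kappa>)"
    have xl: "x + 2*\<kappa> \<le> lc c" using x unfolding lc_def by simp
    have CkA: "lc c \<notin> Ck x \<kappa>" using Ck_lt xl by fastforce
    have AD: "A - {lc c} = Ck x \<kappa>" unfolding A_def using CkA by auto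
    have qA: "lc cs \<notin> A" unfolding A_def using csc Ck_lt unfolding lc_def by fastforce
    show ?thesis unfolding lastL Cw_def A_def[symmetric]
      using swap_wd[of "lc c" A "lc cs" m] qA AD lc_lt[OF c] lc_lt[OF csc(2)] unfolding A_def by simp
  qed
  ultimately show "greedy_step S L = L @ [Cw (LEAST c'. c' \<in> T) x]" unfolding cs_def by simp
qed

end

definition endv :: "nat \<Rightarrow> nat \<Rightarrow> nat \<Rightarrow> nat" where
  "endv k i Mx = (if i < Mx then Mx else if odd k \<and> 0 < Mx then Mx - 1 else 0)"

lemma endv_le: "endv k i Mx \<le> Mx" unfolding endv_def by auto

locale stpI = stp +
  assumes IHQ: "\<And>m' i. 2*\<kappa> \<le> m' \<Longrightarrow> i \<le> m' - 2*\<kappa> \<Longrightarrow>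
     set (greedy (H m' \<kappa>) (wd m' (Ck i \<kappa>))) = H m' \<kappa> \<and>
     last (greedy (H m' \<kappa>) (wd m' (Ck i \<kappa>))) = wd m' (Ck (endv \<kappa> i (m' - 2*\<kappa>)) \<kappa>)"
  and IHR: "\<And>m' A. 2*\<kappa> \<le> m' \<Longrightarrow> A \<subseteq> {..<m'} \<Longrightarrow> wd m' A \<in> H m' \<kappa> \<Longrightarrow>
     (\<forall>i \<le> m' - 2*\<kappa>. A \<noteq> Ck i \<kappa>) \<Longrightarrow>
     last (greedy (H m' \<kappa>) (wd m' A)) = wd m' (Ck (m' - 2*\<kappa>) \<kappa>) \<and>
     wd m' (Ck 0 \<kappa>) \<notin> set (greedy (H m' \<kappa>) (wd m' A))"
begin

definition nx :: "nat \<Rightarrow> nat \<Rightarrow> nat" where "nx y c = (if \<kappa> = 0 then 0 else endv \<kappa> y c)"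

lemma embc_inj: "embc c v = embc c w \<longleftrightarrow> v = w" unfolding embc_def by simp

lemma phaseQ:
  assumes c: "c \<le> M" and y: "y \<le> c" and L0: "\<And>w. w \<in> set L0 \<Longrightarrow> w \<notin> slice c"
  defines "L2 \<equiv> L0 @ map (embc c) (greedy (S' c) (wd (lc c) (Ck y \<kappa>)))"
  shows "runs S (L0 @ [Cw c y]) L2" "\<forall>p q. (p,q) \<in> cands S L2 \<longrightarrow> lc c \<le> p"
    "set L2 = set L0 \<union> slice c" "last L2 = Cw c (nx y c)" "L2 \<noteq> []"
proof -
  let ?v = "wd (lc c) (Ck y \<kappa>)"
  let ?G = "greedy (S' c) ?v"
  have v: "?v \<in> S' c" using Ck_S'[OF y] .
  have fin: "finite (S' c)" unfolding S'_def by (rule H_finite)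
  have e0: "embc c ?v = Cw c y" using Cw_embc[OF y c] by simp
  show "runs S (L0 @ [Cw c y]) L2" using phase(1)[OF c v L0] e0 unfolding L2_def by simp
  show "\<forall>p q. (p,q) \<in> cands S L2 \<longrightarrow> lc c \<le> p" using phase(2)[OF c v L0] unfolding L2_def by blast
  have IQ: "set ?G = H (lc c) \<kappa> \<and> last ?G = wd (lc c) (Ck (endv \<kappa> y (lc c - 2*\<kappa>)) \<kappa>)"
    unfolding S'_def by (rule IHQ) (use y in \<open>auto simp: lc_def\<close>)
  have lcc: "lc c - 2*\<kappa> = c" unfolding lc_def by simp
  have "set (map (embc c) ?G) = slice c" using IQ unfolding slice_def S'_def by simp
  then show "set L2 = set L0 \<union> slice c" unfolding L2_def by simp
  have Gne: "?G \<noteq> []" using greedy_ne[OF fin v] by blast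
  have "last L2 = embc c (last ?G)" unfolding L2_def using Gne by (simp add: last_map)
  also have "\<dots> = embc c (wd (lc c) (Ck (endv \<kappa> y c) \<kappa>))" using IQ lcc by simp
  also have "\<dots> = Cw c (endv \<kappa> y c)" using Cw_embc[OF _ c, of "endv \<kappa> y c"] endv_le[of \<kappa> y c] by simp
  also have "\<dots> = Cw c (nx y c)" unfolding nx_def using Cw_k0 by simp
  finally show "last L2 = Cw c (nx y c)" .
  show "L2 \<noteq> []" unfolding L2_def using Gne by simp
qed

lemma nx_lt: "y < c \<Longrightarrow> nx y c = (if \<kappa> = 0 then 0 else c)"
  unfolding nx_def endv_def by simp

lemma up:
  "M - c = d \<Longrightarrow> c \<le> M \<Longrightarrow> x \<le> c \<Longrightarrow> (\<kappa> = 0 \<longrightarrow> x = 0) \<Longrightarrow> L \<noteq> [] \<Longrightarrow> last L = Cw c x \<Longrightarrow>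
   (\<forall>p q. (p,q) \<in> cands S L \<longrightarrow> lc c \<le> p) \<Longrightarrow>
   (\<forall>c'. x \<le> c' \<and> c' < c \<longrightarrow> slice c' \<subseteq> set L) \<Longrightarrow>
   (\<kappa> = 0 \<longrightarrow> slice c \<subseteq> set L) \<Longrightarrow>
   (\<forall>c'. c < c' \<and> c' \<le> M \<longrightarrow> (c' \<in> V \<and> slice c' \<subseteq> set L) \<or> (c' \<notin> V \<and> slice c' \<inter> set L = {})) \<Longrightarrow>
   \<exists>L'. runs S L L' \<and> cands S L' = {} \<and> set L' = set L \<union> (\<Union>c'\<in>{c<..M}. slice c') \<and>
     ((\<forall>c'. c < c' \<and> c' \<le> M \<longrightarrow> c' \<in> V) \<longrightarrow> L' = L) \<and>
     (\<forall>cf. c < cf \<and> cf \<le> M \<and> cf \<notin> V \<and> (\<forall>c'. cf < c' \<and> c' \<le> M \<longrightarrow> c' \<in> V) \<longrightarrow>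
        last L' = wd m (Ck cf (Suc \<kappa>)))"
proof (induction d arbitrary: c x L rule: less_induct)
  case (less d c x L)
  note d = less.prems(1) and c = less.prems(2) and x = less.prems(3) and x0 = less.prems(4)
    and ne = less.prems(5) and lastL = less.prems(6) and stuck = less.prems(7)
    and lowfull = less.prems(8) and k0full = less.prems(9) and hiV = less.prems(10)
  define T where "T = {c'. x \<le> c' \<and> c' \<le> M \<and> c' \<noteq> c \<and> Cw c' x \<notin> set L}"
  have Tchar: "c' \<in> T \<longleftrightarrow> c < c' \<and> c' \<le> M \<and> c' \<notin> V" for c'
  proof
    assume cT: "c' \<in> T"
    then have c1: "x \<le> c'" "c' \<le> M" "c' \<noteq> c" "Cw c' x \<notin> set L" unfolding T_def by auto
    have inS: "Cw c' x \<in> slice c'" using Cw_slice[OF c1(1,2)] .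
    have "\<not> c' < c"
    proof
      assume "c' < c"
      then have "slice c' \<subseteq> set L" using lowfull c1(1) by blast
      then show False using inS c1(4) by blast
    qed
    then have gt: "c < c'" using c1(3) by simp
    have "c' \<notin> V"
    proof
      assume "c' \<in> V"
      then have "slice c' \<subseteq> set L" using hiV gt c1(2) by blast
      then show False using inS c1(4) by blast
    qed
    then show "c < c' \<and> c' \<le> M \<and> c' \<notin> V" using gt c1(2) by simp
  next
    assume h: "c < c' \<and> c' \<le> M \<and> c' \<notin> V"
    then have "slice c' \<inter> set L = {}" using hiV by blast
    moreover have "Cw c' x \<in> slice c'" using Cw_slice h x by simp
    ultimately have "Cw c' x \<notin> set L" by blast
    then show "c' \<in> T" unfolding T_def using h x by simp
  qed
  show ?case
  proof (cases "\<forall>c'. c < c' \<and> c' \<le> M \<longrightarrow> c' \<in> V")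
    case True
    then have "T = {}" using Tchar by blast
    then have st: "greedy_step S L = L"
      using trans_step(1)[OF c x x0 ne lastL stuck] unfolding T_def by blast
    have "cands S L = {}" using st step_fix_iff by blast
    moreover have "(\<Union>c'\<in>{c<..M}. slice c') \<subseteq> set L" using True hiV by fastforce
    ultimately show ?thesis using True runs_refl[of S L] by blast
  next
    case False
    then obtain c1 where c1: "c < c1" "c1 \<le> M" "c1 \<notin> V" by blast
    then have "c1 \<in> T" using Tchar by blast
    then have TN: "T \<noteq> {}" by blast
    define cs where "cs = (LEAST c'. c' \<in> T)"
    have csT: "cs \<in> T" unfolding cs_def using \<open>c1 \<in> T\<close> by (rule LeastI)
    then have cs: "c < cs" "cs \<le> M" "cs \<notin> V" using Tchar by auto
    have between: "c' \<in> V" if "c < c'" "c' < cs" for c'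
    proof (rule ccontr)
      assume "c' \<notin> V"
      then have "c' \<in> T" using Tchar that cs(2) by simp
      then have "cs \<le> c'" unfolding cs_def by (rule Least_le)
      then show False using that by simp
    qed
    have st: "greedy_step S L = L @ [Cw cs x]"
      using trans_step(2)[OF c x x0 ne lastL stuck] TN unfolding T_def[symmetric] cs_def by blast
    have disj: "\<And>w. w \<in> set L \<Longrightarrow> w \<notin> slice cs"
      using hiV cs by blast
    have xcs: "x \<le> cs" using x cs by simp
    define L2 where "L2 = L @ map (embc cs) (greedy (S' cs) (wd (lc cs) (Ck x \<kappa>)))"
    have P: "runs S (L @ [Cw cs x]) L2" "\<forall>p q. (p,q) \<in> cands S L2 \<longrightarrow> lc cs \<le> p"
      "set L2 = set L \<union> slice cs" "last L2 = Cw cs (nx x cs)" "L2 \<noteq> []"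
      using phaseQ[of cs x L, OF cs(2) xcs disj] unfolding L2_def by auto
    define x2 where "x2 = (if \<kappa> = 0 then 0 else cs)"
    have nxx: "nx x cs = x2" unfolding x2_def using nx_lt x cs by simp
    have r1: "runs S L L2" using runs_trans[OF runs_step[OF st] P(1)] .
    have dlt: "M - cs < d" using d cs by simp
    have IH: "\<exists>L'. runs S L2 L' \<and> cands S L' = {} \<and> set L' = set L2 \<union> (\<Union>c'\<in>{cs<..M}. slice c') \<and>
     ((\<forall>c'. cs < c' \<and> c' \<le> M \<longrightarrow> c' \<in> V) \<longrightarrow> L' = L2) \<and>
     (\<forall>cf. cs < cf \<and> cf \<le> M \<and> cf \<notin> V \<and> (\<forall>c'. cf < c' \<and> c' \<le> M \<longrightarrow> c' \<in> V) \<longrightarrow>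
        last L' = wd m (Ck cf (Suc \<kappa>)))"
    proof (rule less.IH[OF dlt refl cs(2)])
      show "x2 \<le> cs" unfolding x2_def by simp
      show "\<kappa> = 0 \<longrightarrow> x2 = 0" unfolding x2_def by simp
      show "L2 \<noteq> []" by (rule P(5))
      show "last L2 = Cw cs x2" using P(4) nxx by simp
      show "\<forall>p q. (p, q) \<in> cands S L2 \<longrightarrow> lc cs \<le> p" by (rule P(2))
      show "\<forall>c'. x2 \<le> c' \<and> c' < cs \<longrightarrow> slice c' \<subseteq> set L2"
      proof (intro allI impI)
        fix c' assume h: "x2 \<le> c' \<and> c' < cs"
        then have k0: "\<kappa> = 0" unfolding x2_def by (cases "\<kappa> = 0") auto
        then have "x = 0" using x0 by simp
        have "slice c' \<subseteq> set L"
        proof (cases "c' < c")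
          case True then show ?thesis using lowfull \<open>x = 0\<close> by simp
        next
          case False
          show ?thesis
          proof (cases "c' = c")
            case True then show ?thesis using k0full k0 by simp
          next
            case False
            then have "c < c'" using \<open>\<not> c' < c\<close> by simp
            then have "c' \<in> V" using between h by simp
            then show ?thesis using hiV \<open>c < c'\<close> h cs(2) by auto
          qed
        qed
        then show "slice c' \<subseteq> set L2" using P(3) by blast
      qed
      show "\<kappa> = 0 \<longrightarrow> slice cs \<subseteq> set L2" using P(3) by blast
      show "\<forall>c'. cs < c' \<and> c' \<le> M \<longrightarrow> c' \<in> V \<and> slice c' \<subseteq> set L2 \<or> c' \<notin> V \<and> slice c' \<inter> set L2 = {}"
      proof (intro allI impI)
        fix c' assume h: "cs < c' \<and> c' \<le> M"
        have dj: "slice c' \<inter> slice cs = {}" using slice_disj h cs(2) by simp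
        have "c < c'" using h cs by simp
        then have "c' \<in> V \<and> slice c' \<subseteq> set L \<or> c' \<notin> V \<and> slice c' \<inter> set L = {}" using hiV h by blast
        then show "c' \<in> V \<and> slice c' \<subseteq> set L2 \<or> c' \<notin> V \<and> slice c' \<inter> set L2 = {}"
          using P(3) dj by blast
      qed
    qed
    then obtain L' where L': "runs S L2 L'" "cands S L' = {}"
      "set L' = set L2 \<union> (\<Union>c'\<in>{cs<..M}. slice c')"
      "(\<forall>c'. cs < c' \<and> c' \<le> M \<longrightarrow> c' \<in> V) \<longrightarrow> L' = L2"
      "\<forall>cf. cs < cf \<and> cf \<le> M \<and> cf \<notin> V \<and> (\<forall>c'. cf < c' \<and> c' \<le> M \<longrightarrow> c' \<in> V) \<longrightarrow>
        last L' = wd m (Ck cf (Suc \<kappa>))" by blast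
    have runs': "runs S L L'" using runs_trans[OF r1 L'(1)] .
    have setL': "set L' = set L \<union> (\<Union>c'\<in>{c<..M}. slice c')"
    proof
      show "set L' \<subseteq> set L \<union> (\<Union>c'\<in>{c<..M}. slice c')"
        unfolding L'(3) P(3) using cs by auto
      show "set L \<union> (\<Union>c'\<in>{c<..M}. slice c') \<subseteq> set L'"
      proof
        fix w assume "w \<in> set L \<union> (\<Union>c'\<in>{c<..M}. slice c')"
        then consider "w \<in> set L" | c' where "c < c'" "c' \<le> M" "w \<in> slice c'" by auto
        then show "w \<in> set L'"
        proof cases
          case 1 then show ?thesis unfolding L'(3) P(3) by simp
        next
          case 2
          show ?thesis
          proof (cases "c' < cs")
            case True
            then have "c' \<in> V" using between 2 by simp
            then have "slice c' \<subseteq> set L" using hiV 2 by blast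
            then show ?thesis unfolding L'(3) P(3) using 2 by blast
          next
            case False
            then have "c' = cs \<or> cs < c'" by auto
            then show ?thesis unfolding L'(3) P(3) using 2 by auto
          qed
        qed
      qed
    qed
    have lastc: "last L' = wd m (Ck cf (Suc \<kappa>))"
      if cf: "c < cf" "cf \<le> M" "cf \<notin> V" "\<forall>c'. cf < c' \<and> c' \<le> M \<longrightarrow> c' \<in> V" for cf
    proof -
      have "cs \<le> cf"
      proof (rule ccontr)
        assume "\<not> cs \<le> cf"
        then have "cf \<in> V" using between cf by simp
        then show False using cf by simp
      qed
      then consider "cf = cs" | "cs < cf" by linarith
      then show ?thesis
      proof cases
        case 1
        then have "L' = L2" using L'(4) cf(4) by blast
        then have "last L' = Cw cs x2" using P(4) nxx by simp
        also have "\<dots> = Cw cs cs" unfolding x2_def using Cw_k0 by simp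
        also have "\<dots> = wd m (Ck cs (Suc \<kappa>))" by (rule Cw_diag)
        finally show ?thesis using 1 by simp
      next
        case 2 then show ?thesis using L'(5) cf by blast
      qed
    qed
    show ?thesis using runs' L'(2) setL' lastc cs(3) False by blast
  qed
qed

end

context stpI begin

lemma down:
  "odd \<kappa> \<Longrightarrow> 1 \<le> c \<Longrightarrow> c \<le> M \<Longrightarrow> L \<noteq> [] \<Longrightarrow> last L = Cw c (c - 1) \<Longrightarrow>
   (\<forall>p q. (p,q) \<in> cands S L \<longrightarrow> lc c \<le> p) \<Longrightarrow> (\<forall>c'. c' < c \<longrightarrow> slice c' \<inter> set L = {}) \<Longrightarrow>
   \<exists>L'. runs S L L' \<and> L' \<noteq> [] \<and> last L' = Cw 0 0 \<and> (\<forall>p q. (p,q) \<in> cands S L' \<longrightarrow> lc 0 \<le> p) \<and>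
       set L' = set L \<union> (\<Union>c'\<in>{..<c}. slice c')"
proof (induction c arbitrary: L)
  case 0 then show ?case by simp
next
  case (Suc c0)
  note od = Suc.prems(1) and cM = Suc.prems(3) and ne = Suc.prems(4) and lastL = Suc.prems(5)
    and stuck = Suc.prems(6) and dis = Suc.prems(7)
  have k0: "\<kappa> \<noteq> 0" using od by (cases \<kappa>) auto
  have x: "c0 \<le> Suc c0" by simp
  have x0: "\<kappa> = 0 \<longrightarrow> c0 = 0" using k0 by simp
  have lastL': "last L = Cw (Suc c0) c0" using lastL by simp
  define T where "T = {c'. c0 \<le> c' \<and> c' \<le> M \<and> c' \<noteq> Suc c0 \<and> Cw c' c0 \<notin> set L}"
  have c0M: "c0 \<le> M" using cM by simp
  have d0: "slice c0 \<inter> set L = {}" using dis by simp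
  have "Cw c0 c0 \<in> slice c0" using Cw_slice[OF _ c0M] by simp
  then have "Cw c0 c0 \<notin> set L" using d0 by blast
  then have c0T: "c0 \<in> T" unfolding T_def using c0M by simp
  have LT: "(LEAST c'. c' \<in> T) = c0"
    by (rule Least_equality) (use c0T in \<open>auto simp: T_def\<close>)
  have TN: "T \<noteq> {}" using c0T by blast
  have st: "greedy_step S L = L @ [Cw c0 c0]"
    using trans_step(2)[OF cM x x0 ne lastL' stuck] TN LT unfolding T_def by simp
  have disj: "\<And>w. w \<in> set L \<Longrightarrow> w \<notin> slice c0" using d0 by blast
  define L2 where "L2 = L @ map (embc c0) (greedy (S' c0) (wd (lc c0) (Ck c0 \<kappa>)))"
  have P: "runs S (L @ [Cw c0 c0]) L2" "\<forall>p q. (p,q) \<in> cands S L2 \<longrightarrow> lc c0 \<le> p"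
    "set L2 = set L \<union> slice c0" "last L2 = Cw c0 (nx c0 c0)" "L2 \<noteq> []"
    using phaseQ[of c0 c0 L, OF c0M le_refl disj] unfolding L2_def by auto
  have r1: "runs S L L2" using runs_trans[OF runs_step[OF st] P(1)] .
  have nxx: "nx c0 c0 = (if 0 < c0 then c0 - 1 else 0)" unfolding nx_def endv_def using k0 od by simp
  show ?case
  proof (cases "c0 = 0")
    case True
    then have "last L2 = Cw 0 0" using P(4) nxx by simp
    moreover have "set L2 = set L \<union> (\<Union>c'\<in>{..<Suc c0}. slice c')" using P(3) True by (simp add: lessThan_Suc)
    ultimately show ?thesis using r1 P(5) P(2) True by blast
  next
    case False
    have IH: "\<exists>L'. runs S L2 L' \<and> L' \<noteq> [] \<and> last L' = Cw 0 0 \<and> (\<forall>p q. (p,q) \<in> cands S L' \<longrightarrow> lc 0 \<le> p) \<and>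
       set L' = set L2 \<union> (\<Union>c'\<in>{..<c0}. slice c')"
    proof (rule Suc.IH[OF od _ c0M P(5) _ P(2)])
      show "1 \<le> c0" using False by simp
      show "last L2 = Cw c0 (c0 - 1)" using P(4) nxx False by simp
      show "\<forall>c'. c' < c0 \<longrightarrow> slice c' \<inter> set L2 = {}"
      proof (intro allI impI)
        fix c' assume "c' < c0"
        then have "slice c' \<inter> slice c0 = {}" "slice c' \<inter> set L = {}" using slice_disj c0M dis by auto
        then show "slice c' \<inter> set L2 = {}" using P(3) by blast
      qed
    qed
    then obtain L' where L': "runs S L2 L'" "L' \<noteq> []" "last L' = Cw 0 0"
      "\<forall>p q. (p,q) \<in> cands S L' \<longrightarrow> lc 0 \<le> p" "set L' = set L2 \<union> (\<Union>c'\<in>{..<c0}. slice c')" by blast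
    have "set L' = set L \<union> (\<Union>c'\<in>{..<Suc c0}. slice c')" using L'(5) P(3) by (auto simp: lessThan_Suc)
    then show ?thesis using runs_trans[OF r1 L'(1)] L'(2,3,4) by blast
  qed
qed

lemma in_slice_S: "w \<in> slice c \<Longrightarrow> c \<le> M \<Longrightarrow> w \<in> S"
  using slice_sub by blast

lemma fill_S: "slice 0 \<subseteq> X \<Longrightarrow> X \<subseteq> S \<Longrightarrow> X \<union> (\<Union>c'\<in>{0<..M}. slice c') = S"
proof
  assume "X \<subseteq> S"
  then show "X \<union> (\<Union>c'\<in>{0<..M}. slice c') \<subseteq> S" by (auto intro: in_slice_S)
next
  assume "slice 0 \<subseteq> X"
  show "S \<subseteq> X \<union> (\<Union>c'\<in>{0<..M}. slice c')"
  proof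
    fix w assume "w \<in> S"
    then obtain c where "c \<le> M" "w \<in> slice c" using S_cover by blast
    then show "w \<in> X \<union> (\<Union>c'\<in>{0<..M}. slice c')" using \<open>slice 0 \<subseteq> X\<close> by (cases "c = 0") auto
  qed
qed

lemma S_fin: "finite S" unfolding S_def by (rule H_finite)

lemma Q_step:
  assumes i: "i \<le> M"
  shows "set (greedy S (wd m (Ck i (Suc \<kappa>)))) = S \<and>
         last (greedy S (wd m (Ck i (Suc \<kappa>)))) = wd m (Ck (endv (Suc \<kappa>) i M) (Suc \<kappa>))"
proof -
  let ?a = "wd m (Ck i (Suc \<kappa>))"
  have aC: "?a = Cw i i" using Cw_diag by simp
  have aS: "?a \<in> S" using aC Cw_slice[OF le_refl i] slice_sub[OF i] by auto
  define L1 where "L1 = [] @ map (embc i) (greedy (S' i) (wd (lc i) (Ck i \<kappa>)))"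
  have P1: "runs S ([] @ [Cw i i]) L1" "\<forall>p q. (p,q) \<in> cands S L1 \<longrightarrow> lc i \<le> p"
    "set L1 = set [] \<union> slice i" "last L1 = Cw i (nx i i)" "L1 \<noteq> []"
    using phaseQ[of i i "[]", OF i le_refl] unfolding L1_def by auto
  have r1: "runs S [?a] L1" using P1(1) aC by simp
  have s1: "set L1 = slice i" using P1(3) by simp
  have fin: "\<And>L'. runs S [?a] L' \<Longrightarrow> cands S L' = {} \<Longrightarrow> greedy S ?a = L'"
    using greedy_eq[OF S_fin aS] by blast
  show ?thesis
  proof (cases "odd \<kappa> \<and> 0 < i")
    case True
    then have k0: "\<kappa> \<noteq> 0" and od: "odd \<kappa>" by (cases \<kappa>, auto)+
    have "nx i i = i - 1" unfolding nx_def endv_def using True k0 by simp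
    then have lastL1: "last L1 = Cw i (i - 1)" using P1(4) by simp
    have "\<exists>L'. runs S L1 L' \<and> L' \<noteq> [] \<and> last L' = Cw 0 0 \<and> (\<forall>p q. (p,q) \<in> cands S L' \<longrightarrow> lc 0 \<le> p) \<and>
       set L' = set L1 \<union> (\<Union>c'\<in>{..<i}. slice c')"
    proof (rule down[OF od _ i P1(5) lastL1 P1(2)])
      show "1 \<le> i" using True by simp
      show "\<forall>c'. c' < i \<longrightarrow> slice c' \<inter> set L1 = {}" using slice_disj i s1 by auto
    qed
    then obtain L2 where L2: "runs S L1 L2" "L2 \<noteq> []" "last L2 = Cw 0 0"
      "\<forall>p q. (p,q) \<in> cands S L2 \<longrightarrow> lc 0 \<le> p" "set L2 = slice i \<union> (\<Union>c'\<in>{..<i}. slice c')"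
      using s1 by auto
    have "\<exists>L'. runs S L2 L' \<and> cands S L' = {} \<and> set L' = set L2 \<union> (\<Union>c'\<in>{0<..M}. slice c') \<and>
     ((\<forall>c'. 0 < c' \<and> c' \<le> M \<longrightarrow> c' \<in> {..i}) \<longrightarrow> L' = L2) \<and>
     (\<forall>cf. 0 < cf \<and> cf \<le> M \<and> cf \<notin> {..i} \<and> (\<forall>c'. cf < c' \<and> c' \<le> M \<longrightarrow> c' \<in> {..i}) \<longrightarrow>
        last L' = wd m (Ck cf (Suc \<kappa>)))"
    proof (rule up[OF refl _ le_refl _ L2(2) L2(3) L2(4)])
      show "0 \<le> M" by simp
      show "\<kappa> = 0 \<longrightarrow> 0 = 0" by simp
      show "\<forall>c'. 0 \<le> c' \<and> c' < 0 \<longrightarrow> slice c' \<subseteq> set L2" by simp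
      show "\<kappa> = 0 \<longrightarrow> slice 0 \<subseteq> set L2" using k0 by simp
      show "\<forall>c'. 0 < c' \<and> c' \<le> M \<longrightarrow> c' \<in> {..i} \<and> slice c' \<subseteq> set L2 \<or> c' \<notin> {..i} \<and> slice c' \<inter> set L2 = {}"
      proof (intro allI impI)
        fix c' assume h: "0 < c' \<and> c' \<le> M"
        show "c' \<in> {..i} \<and> slice c' \<subseteq> set L2 \<or> c' \<notin> {..i} \<and> slice c' \<inter> set L2 = {}"
        proof (cases "c' \<le> i")
          case True
          then have "slice c' \<subseteq> set L2" unfolding L2(5) by (cases "c' = i") auto
          then show ?thesis using True by simp
        next
          case False
          have "slice c' \<inter> slice i = {}" using slice_disj h i False by simp
          moreover have "slice c' \<inter> slice d = {}" if "d < i" for d using slice_disj h i False that by simp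
          ultimately have "slice c' \<inter> set L2 = {}" unfolding L2(5) by blast
          then show ?thesis using False by simp
        qed
      qed
    qed
    then obtain L' where L': "runs S L2 L'" "cands S L' = {}" "set L' = set L2 \<union> (\<Union>c'\<in>{0<..M}. slice c')"
     "(\<forall>c'. 0 < c' \<and> c' \<le> M \<longrightarrow> c' \<in> {..i}) \<longrightarrow> L' = L2"
     "\<forall>cf. 0 < cf \<and> cf \<le> M \<and> cf \<notin> {..i} \<and> (\<forall>c'. cf < c' \<and> c' \<le> M \<longrightarrow> c' \<in> {..i}) \<longrightarrow>
        last L' = wd m (Ck cf (Suc \<kappa>))" by blast
    have G: "greedy S ?a = L'" using fin runs_trans[OF runs_trans[OF r1 L2(1)] L'(1)] L'(2) by blast
    have sub2: "set L2 \<subseteq> S" unfolding L2(5) using i by (auto intro: in_slice_S)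
    have "slice 0 \<subseteq> set L2" unfolding L2(5) using True by auto
    then have setS: "set L' = S" using L'(3) fill_S sub2 by simp
    have "last L' = wd m (Ck (endv (Suc \<kappa>) i M) (Suc \<kappa>))"
    proof (cases "i < M")
      case True
      then have "last L' = wd m (Ck M (Suc \<kappa>))" using L'(5) by auto
      then show ?thesis unfolding endv_def using True by simp
    next
      case False
      then have "L' = L2" using L'(4) i by auto
      then have "last L' = wd m (Ck 0 (Suc \<kappa>))" using L2(3) Cw_diag by simp
      then show ?thesis unfolding endv_def using False od by simp
    qed
    then show ?thesis using G setS by simp
  next
    case False
    then have nx0: "nx i i = 0" unfolding nx_def endv_def by auto
    then have lastL1: "last L1 = Cw i 0" using P1(4) by simp
    show ?thesis
    proof (cases "i = 0")
      case True
      have "\<exists>L'. runs S L1 L' \<and> cands S L' = {} \<and> set L' = set L1 \<union> (\<Union>c'\<in>{0<..M}. slice c') \<and>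
       ((\<forall>c'. 0 < c' \<and> c' \<le> M \<longrightarrow> c' \<in> {}) \<longrightarrow> L' = L1) \<and>
       (\<forall>cf. 0 < cf \<and> cf \<le> M \<and> cf \<notin> {} \<and> (\<forall>c'. cf < c' \<and> c' \<le> M \<longrightarrow> c' \<in> {}) \<longrightarrow>
          last L' = wd m (Ck cf (Suc \<kappa>)))"
      proof (rule up[OF refl _ le_refl _ P1(5) _ ])
        show "0 \<le> M" by simp
        show "\<kappa> = 0 \<longrightarrow> 0 = 0" by simp
        show "last L1 = Cw 0 0" using lastL1 True by simp
        show "\<forall>p q. (p, q) \<in> cands S L1 \<longrightarrow> lc 0 \<le> p" using P1(2) True by simp
        show "\<forall>c'. 0 \<le> c' \<and> c' < 0 \<longrightarrow> slice c' \<subseteq> set L1" by simp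
        show "\<kappa> = 0 \<longrightarrow> slice 0 \<subseteq> set L1" using s1 True by simp
        show "\<forall>c'. 0 < c' \<and> c' \<le> M \<longrightarrow> c' \<in> {} \<and> slice c' \<subseteq> set L1 \<or> c' \<notin> {} \<and> slice c' \<inter> set L1 = {}"
          using slice_disj s1 True i by auto
      qed
      then obtain L' where L': "runs S L1 L'" "cands S L' = {}" "set L' = set L1 \<union> (\<Union>c'\<in>{0<..M}. slice c')"
       "(\<forall>c'. 0 < c' \<and> c' \<le> M \<longrightarrow> c' \<in> {}) \<longrightarrow> L' = L1"
       "\<forall>cf. 0 < cf \<and> cf \<le> M \<and> cf \<notin> {} \<and> (\<forall>c'. cf < c' \<and> c' \<le> M \<longrightarrow> c' \<in> {}) \<longrightarrow>
          last L' = wd m (Ck cf (Suc \<kappa>))" by blast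
      have G: "greedy S ?a = L'" using fin runs_trans[OF r1 L'(1)] L'(2) by blast
      have setS: "set L' = S" using L'(3) fill_S[of "set L1"] s1 True slice_sub[OF i] by simp
      have "last L' = wd m (Ck (endv (Suc \<kappa>) i M) (Suc \<kappa>))"
      proof (cases "0 < M")
        case True
        then have "last L' = wd m (Ck M (Suc \<kappa>))" using L'(5) by auto
        then show ?thesis unfolding endv_def using True \<open>i = 0\<close> by simp
      next
        case False
        then have "L' = L1" using L'(4) by auto
        then have "last L' = wd m (Ck 0 (Suc \<kappa>))" using lastL1 \<open>i = 0\<close> Cw_diag by simp
        then show ?thesis unfolding endv_def using False \<open>i = 0\<close> by simp
      qed
      then show ?thesis using G setS by simp
    next
      case inz: False
      have ev: "odd (Suc \<kappa>)" using \<open>\<not> (odd \<kappa> \<and> 0 < i)\<close> inz by simp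
      have x0: "\<kappa> = 0 \<longrightarrow> (0::nat) = 0" by simp
      define T where "T = {c'. 0 \<le> c' \<and> c' \<le> M \<and> c' \<noteq> i \<and> Cw c' 0 \<notin> set L1}"
      have "Cw 0 0 \<in> slice 0" using Cw_slice by simp
      moreover have "slice 0 \<inter> slice i = {}" using slice_disj i inz by simp
      ultimately have "Cw 0 0 \<notin> set L1" using s1 by blast
      then have zT: "0 \<in> T" unfolding T_def using inz by simp
      have LT: "(LEAST c'. c' \<in> T) = 0" using zT by (simp add: Least_eq_0)
      have TN: "T \<noteq> {}" using zT by blast
      have st: "greedy_step S L1 = L1 @ [Cw 0 0]"
        using trans_step(2)[OF i _ x0 P1(5) lastL1 P1(2)] TN LT unfolding T_def by simp
      have disj: "\<And>w. w \<in> set L1 \<Longrightarrow> w \<notin> slice 0" using \<open>slice 0 \<inter> slice i = {}\<close> s1 by blast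
      define L2 where "L2 = L1 @ map (embc 0) (greedy (S' 0) (wd (lc 0) (Ck 0 \<kappa>)))"
      have P2: "runs S (L1 @ [Cw 0 0]) L2" "\<forall>p q. (p,q) \<in> cands S L2 \<longrightarrow> lc 0 \<le> p"
        "set L2 = set L1 \<union> slice 0" "last L2 = Cw 0 (nx 0 0)" "L2 \<noteq> []"
        using phaseQ[of 0 0 L1, OF _ le_refl disj] unfolding L2_def by auto
      have nx00: "nx 0 0 = 0" unfolding nx_def endv_def by simp
      have r2: "runs S [?a] L2" using runs_trans[OF r1 runs_trans[OF runs_step[OF st] P2(1)]] .
      have "\<exists>L'. runs S L2 L' \<and> cands S L' = {} \<and> set L' = set L2 \<union> (\<Union>c'\<in>{0<..M}. slice c') \<and>
       ((\<forall>c'. 0 < c' \<and> c' \<le> M \<longrightarrow> c' \<in> {i}) \<longrightarrow> L' = L2) \<and>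
       (\<forall>cf. 0 < cf \<and> cf \<le> M \<and> cf \<notin> {i} \<and> (\<forall>c'. cf < c' \<and> c' \<le> M \<longrightarrow> c' \<in> {i}) \<longrightarrow>
          last L' = wd m (Ck cf (Suc \<kappa>)))"
      proof (rule up[OF refl _ le_refl _ P2(5) _ P2(2)])
        show "0 \<le> M" by simp
        show "\<kappa> = 0 \<longrightarrow> 0 = 0" by simp
        show "last L2 = Cw 0 0" using P2(4) nx00 by simp
        show "\<forall>c'. 0 \<le> c' \<and> c' < 0 \<longrightarrow> slice c' \<subseteq> set L2" by simp
        show "\<kappa> = 0 \<longrightarrow> slice 0 \<subseteq> set L2" using P2(3) by simp
        show "\<forall>c'. 0 < c' \<and> c' \<le> M \<longrightarrow> c' \<in> {i} \<and> slice c' \<subseteq> set L2 \<or> c' \<notin> {i} \<and> slice c' \<inter> set L2 = {}"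
        proof (intro allI impI)
          fix c' assume h: "0 < c' \<and> c' \<le> M"
          show "c' \<in> {i} \<and> slice c' \<subseteq> set L2 \<or> c' \<notin> {i} \<and> slice c' \<inter> set L2 = {}"
          proof (cases "c' = i")
            case True then show ?thesis using P2(3) s1 by simp
          next
            case False
            have "slice c' \<inter> slice i = {}" "slice c' \<inter> slice 0 = {}" using slice_disj h i False by auto
            then show ?thesis using P2(3) s1 False by auto
          qed
        qed
      qed
      then obtain L' where L': "runs S L2 L'" "cands S L' = {}" "set L' = set L2 \<union> (\<Union>c'\<in>{0<..M}. slice c')"
       "(\<forall>c'. 0 < c' \<and> c' \<le> M \<longrightarrow> c' \<in> {i}) \<longrightarrow> L' = L2"
       "\<forall>cf. 0 < cf \<and> cf \<le> M \<and> cf \<notin> {i} \<and> (\<forall>c'. cf < c' \<and> c' \<le> M \<longrightarrow> c' \<in> {i}) \<longrightarrow>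
          last L' = wd m (Ck cf (Suc \<kappa>))" by blast
      have G: "greedy S ?a = L'" using fin runs_trans[OF r2 L'(1)] L'(2) by blast
      have sub2: "set L2 \<subseteq> S" unfolding P2(3) s1 using i by (auto intro: in_slice_S)
      have setS: "set L' = S" using L'(3) fill_S[of "set L2"] P2(3) sub2 by simp
      have "last L' = wd m (Ck (endv (Suc \<kappa>) i M) (Suc \<kappa>))"
      proof (cases "i < M")
        case True
        then have "last L' = wd m (Ck M (Suc \<kappa>))" using L'(5) by auto
        then show ?thesis unfolding endv_def using True by simp
      next
        case False
        then have iM: "i = M" using i by simp
        show ?thesis
        proof (cases "2 \<le> M")
          case True
          have "last L' = wd m (Ck (M - 1) (Suc \<kappa>))"
          proof -
            have "\<forall>c'. M - 1 < c' \<and> c' \<le> M \<longrightarrow> c' \<in> {i}" using iM by auto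
            moreover have "0 < M - 1" "M - 1 \<le> M" "M - 1 \<notin> {i}" using True iM by auto
            ultimately show ?thesis using L'(5) by blast
          qed
          then show ?thesis unfolding endv_def using iM ev True by simp
        next
          case False
          then have "M = 1" using iM inz by simp
          then have "L' = L2" using L'(4) iM by auto
          then have "last L' = wd m (Ck 0 (Suc \<kappa>))" using P2(4) nx00 Cw_diag by simp
          then show ?thesis unfolding endv_def using iM \<open>M = 1\<close> ev by simp
        qed
      qed
      then show ?thesis using G setS by simp
    qed
  qed
qed

end

context stpI begin

lemma R_step:
  assumes As: "A \<subseteq> {..<m}" and aS: "wd m A \<in> S" and nC: "\<forall>i \<le> M. A \<noteq> Ck i (Suc \<kappa>)"
  shows "last (greedy S (wd m A)) = wd m (Ck M (Suc \<kappa>)) \<and> wd m (Ck 0 (Suc \<kappa>)) \<notin> set (greedy S (wd m A))"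
proof -
  obtain c0 where c0: "c0 \<le> M" "wd m A \<in> slice c0" using aS S_cover by blast
  obtain B where B: "good (lc c0) \<kappa> B" "wd m A = wd m (insert (lc c0) B)" using slice_wd[OF c0(1)] c0(2) by blast
  have Bs: "B \<subseteq> {..<lc c0}" using good_sub[OF B(1)] .
  have s2: "insert (lc c0) B \<subseteq> {..<m}" using Bs lc_lt[OF c0(1)] by auto
  have AB: "A = insert (lc c0) B" using wd_inj[OF As s2] B(2) by simp
  define v0 where "v0 = wd (lc c0) B"
  have v0S: "v0 \<in> S' c0" unfolding v0_def S'_def using H_mem[OF Bs] B(1) by simp
  have ev0: "embc c0 v0 = wd m A" unfolding v0_def using embc_wd[OF c0(1) Bs] B(2) by simp
  have fin: "finite (S' c0)" unfolding S'_def by (rule H_finite)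
  define G where "G = greedy (S' c0) v0"
  have Gne: "G \<noteq> []" "set G \<subseteq> S' c0" using greedy_ne[OF fin v0S] unfolding G_def by auto
  have nL0: "\<And>w. w \<in> set ([]::nat list list) \<Longrightarrow> w \<notin> slice c0" by simp
  have P: "runs S ([] @ [embc c0 v0]) ([] @ map (embc c0) G)"
    "\<And>p q. (p,q) \<in> cands S ([] @ map (embc c0) G) \<Longrightarrow> lc c0 \<le> p"
    using phase[OF c0(1) v0S nL0] unfolding G_def by blast+
  have lcc: "lc c0 - 2*\<kappa> = c0" unfolding lc_def by simp
  have k0: "\<kappa> \<noteq> 0"
  proof
    assume "\<kappa> = 0"
    then have "card B = 0" using B(1) unfolding good_def by simp
    moreover have "finite B" using Bs finite_subset by blast
    ultimately have "B = {}" by simp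
    then have "A = Ck c0 (Suc \<kappa>)" using AB \<open>\<kappa> = 0\<close> unfolding lc_def by (simp add: Ck_Suc)
    then show False using nC c0(1) by blast
  qed
  have LG: "last G = wd (lc c0) (Ck c0 \<kappa>) \<and> (c0 = 0 \<longrightarrow> wd (lc c0) (Ck 0 \<kappa>) \<notin> set G)"
  proof (cases "\<exists>y \<le> c0. B = Ck y \<kappa>")
    case True
    then obtain y where y: "y \<le> c0" "B = Ck y \<kappa>" by blast
    have "y \<noteq> c0"
    proof
      assume "y = c0"
      then have "A = Ck c0 (Suc \<kappa>)" using AB y(2) unfolding lc_def by (simp add: Ck_Suc add.commute)
      then show False using nC c0(1) by blast
    qed
    then have yc: "y < c0" using y by simp
    have "last G = wd (lc c0) (Ck (endv \<kappa> y (lc c0 - 2*\<kappa>)) \<kappa>)"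
      using IHQ[of "lc c0" y] y lcc unfolding G_def v0_def S'_def lc_def by simp
    then have "last G = wd (lc c0) (Ck c0 \<kappa>)" using lcc yc unfolding endv_def by simp
    then show ?thesis using yc by simp
  next
    case False
    have "last G = wd (lc c0) (Ck (lc c0 - 2*\<kappa>) \<kappa>) \<and> wd (lc c0) (Ck 0 \<kappa>) \<notin> set G"
      unfolding G_def v0_def S'_def
    proof (rule IHR[OF _ Bs])
      show "2*\<kappa> \<le> lc c0" unfolding lc_def by simp
      show "wd (lc c0) B \<in> H (lc c0) \<kappa>" using v0S unfolding v0_def S'_def .
      show "\<forall>i\<le>lc c0 - 2 * \<kappa>. B \<noteq> Ck i \<kappa>" using False lcc by simp
    qed
    then show ?thesis using lcc by auto
  qed
  let ?L1 = "map (embc c0) G"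
  have lastL1: "last ?L1 = Cw c0 c0" using LG Gne(1) Cw_embc[OF le_refl c0(1)] by (simp add: last_map)
  have setL1: "set ?L1 \<subseteq> slice c0" using Gne(2) unfolding slice_def by auto
  have L1ne: "?L1 \<noteq> []" using Gne by simp
  have stuck1: "\<forall>p q. (p,q) \<in> cands S ?L1 \<longrightarrow> lc c0 \<le> p" using P(2) by simp
  have "\<exists>L'. runs S ?L1 L' \<and> cands S L' = {} \<and> set L' = set ?L1 \<union> (\<Union>c'\<in>{c0<..M}. slice c') \<and>
     ((\<forall>c'. c0 < c' \<and> c' \<le> M \<longrightarrow> c' \<in> {}) \<longrightarrow> L' = ?L1) \<and>
     (\<forall>cf. c0 < cf \<and> cf \<le> M \<and> cf \<notin> {} \<and> (\<forall>c'. cf < c' \<and> c' \<le> M \<longrightarrow> c' \<in> {}) \<longrightarrow>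
        last L' = wd m (Ck cf (Suc \<kappa>)))"
  proof (rule up[OF refl c0(1) le_refl _ L1ne lastL1 stuck1])
    show "\<kappa> = 0 \<longrightarrow> c0 = 0" using k0 by simp
    show "\<forall>c'. c0 \<le> c' \<and> c' < c0 \<longrightarrow> slice c' \<subseteq> set ?L1" by auto
    show "\<kappa> = 0 \<longrightarrow> slice c0 \<subseteq> set ?L1" using k0 by simp
    show "\<forall>c'. c0 < c' \<and> c' \<le> M \<longrightarrow> c' \<in> {} \<and> slice c' \<subseteq> set ?L1 \<or> c' \<notin> {} \<and> slice c' \<inter> set ?L1 = {}"
    proof (intro allI impI)
      fix c' assume h: "c0 < c' \<and> c' \<le> M"
      then have "slice c' \<inter> slice c0 = {}" using slice_disj c0(1) by simp
      then show "c' \<in> {} \<and> slice c' \<subseteq> set ?L1 \<or> c' \<notin> {} \<and> slice c' \<inter> set ?L1 = {}" using setL1 by blast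
    qed
  qed
  then obtain L' where L': "runs S ?L1 L'" "cands S L' = {}" "set L' = set ?L1 \<union> (\<Union>c'\<in>{c0<..M}. slice c')"
     "(\<forall>c'. c0 < c' \<and> c' \<le> M \<longrightarrow> c' \<in> {}) \<longrightarrow> L' = ?L1"
     "\<forall>cf. c0 < cf \<and> cf \<le> M \<and> cf \<notin> {} \<and> (\<forall>c'. cf < c' \<and> c' \<le> M \<longrightarrow> c' \<in> {}) \<longrightarrow>
        last L' = wd m (Ck cf (Suc \<kappa>))" by blast
  have P1': "runs S [embc c0 v0] (map (embc c0) G)" using P(1) by simp
  have r: "runs S [wd m A] L'" using runs_trans[OF P1' L'(1)] ev0 by simp
  have G': "greedy S (wd m A) = L'" using greedy_eq[OF S_fin aS r L'(2)] .
  have last': "last L' = wd m (Ck M (Suc \<kappa>))"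
  proof (cases "c0 < M")
    case True then show ?thesis using L'(5) by auto
  next
    case False
    then have "c0 = M" using c0 by simp
    then have "L' = ?L1" using L'(4) by auto
    then show ?thesis using lastL1 Cw_diag \<open>c0 = M\<close> by simp
  qed
  have C0: "wd m (Ck 0 (Suc \<kappa>)) = Cw 0 0" using Cw_diag by simp
  have C0s: "Cw 0 0 \<in> slice 0" using Cw_slice by simp
  have n1: "Cw 0 0 \<notin> (\<Union>c'\<in>{c0<..M}. slice c')"
  proof
    assume "Cw 0 0 \<in> (\<Union>c'\<in>{c0<..M}. slice c')"
    then obtain c' where "c0 < c'" "c' \<le> M" "Cw 0 0 \<in> slice c'" by auto
    then show False using slice_disj[of 0 c'] C0s by auto
  qed
  have n2: "Cw 0 0 \<notin> set ?L1"
  proof (cases "c0 = 0")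
    case True
    have "Cw 0 0 = embc 0 (wd (lc 0) (Ck 0 \<kappa>))" using Cw_embc by simp
    moreover have "wd (lc 0) (Ck 0 \<kappa>) \<notin> set G" using LG True by simp
    ultimately show ?thesis using True embc_inj by auto
  next
    case False
    then have "slice 0 \<inter> slice c0 = {}" using slice_disj c0(1) by simp
    then show ?thesis using setL1 C0s by blast
  qed
  show ?thesis using G' last' L'(3) n1 n2 C0 by simp
qed

end

lemma good0: "good m 0 A \<longleftrightarrow> A = {}"
proof
  assume g: "good m 0 A"
  have "finite A" using good_sub[OF g] by (rule finite_subset) simp
  then show "A = {}" using g unfolding good_def by simp
next
  assume "A = {}" then show "good m 0 A" by (simp add: good_def sparse_def)
qed

lemma H0: "H m 0 = {wd m {}}"
  unfolding H_def good0 by auto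

lemma greedy0: "greedy (H m 0) (wd m {}) = [wd m {}]"
proof (rule greedy_eq[OF H_finite _ runs_refl])
  show "wd m {} \<in> H m 0" using H0 by simp
  show "cands (H m 0) [wd m {}] = {}"
    unfolding cands_def using htrans_wd by auto
qed

lemma main: "2*k \<le> m \<Longrightarrow>
  (\<forall>i \<le> m - 2*k. set (greedy (H m k) (wd m (Ck i k))) = H m k \<and>
     last (greedy (H m k) (wd m (Ck i k))) = wd m (Ck (endv k i (m - 2*k)) k)) \<and>
  (\<forall>A. A \<subseteq> {..<m} \<longrightarrow> wd m A \<in> H m k \<longrightarrow> (\<forall>i \<le> m - 2*k. A \<noteq> Ck i k) \<longrightarrow>
     last (greedy (H m k) (wd m A)) = wd m (Ck (m - 2*k) k) \<and>
     wd m (Ck 0 k) \<notin> set (greedy (H m k) (wd m A)))"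
proof (induction k arbitrary: m)
  case 0
  have R: "False" if "A \<subseteq> {..<m}" "wd m A \<in> H m 0" "\<forall>i \<le> m. A \<noteq> Ck i 0" for A
  proof -
    have "wd m A = wd m {}" using that(2) H0 by simp
    then have "A = {}" using wd_inj[OF that(1)] by simp
    then show False using that(3) by auto
  qed
  show ?case using greedy0 H0 R by auto
next
  case (Suc \<kappa>)
  have st: "stp \<kappa> m" by (rule stp.intro) (use Suc.prems in simp)
  have ax: "stpI_axioms \<kappa>"
    unfolding stpI_axioms_def using Suc.IH by blast
  interpret I: stpI \<kappa> m using stpI.intro[OF st ax] .
  have SS: "I.S = H m (Suc \<kappa>)" by (rule I.S_def)
  have MM: "I.M = m - 2 * Suc \<kappa>" by (rule I.M_def)
  show ?case
  proof (rule conjI; intro allI impI)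
    fix i assume "i \<le> m - 2 * Suc \<kappa>"
    then show "set (greedy (H m (Suc \<kappa>)) (wd m (Ck i (Suc \<kappa>)))) = H m (Suc \<kappa>) \<and>
      last (greedy (H m (Suc \<kappa>)) (wd m (Ck i (Suc \<kappa>)))) =
      wd m (Ck (endv (Suc \<kappa>) i (m - 2 * Suc \<kappa>)) (Suc \<kappa>))"
      using I.Q_step[of i] unfolding SS MM by simp
  next
    fix A assume "A \<subseteq> {..<m}" "wd m A \<in> H m (Suc \<kappa>)" "\<forall>i\<le>m - 2 * Suc \<kappa>. A \<noteq> Ck i (Suc \<kappa>)"
    then show "last (greedy (H m (Suc \<kappa>)) (wd m A)) = wd m (Ck (m - 2 * Suc \<kappa>) (Suc \<kappa>)) \<and>
       wd m (Ck 0 (Suc \<kappa>)) \<notin> set (greedy (H m (Suc \<kappa>)) (wd m A))"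
      using I.R_step[of A] unfolding SS MM by simp
  qed
qed

lemma Fib_wd: "v \<in> Fib_words n k \<longleftrightarrow> (\<exists>A. A \<subseteq> {..<n} \<and> v = wd n A \<and> card A = k \<and> sparse A)"
proof
  assume v: "v \<in> Fib_words n k"
  have lv: "length v = n" and bin: "set v \<subseteq> {0,1}" and wt: "weight v = k"
    and adj: "\<forall>i. Suc i < n \<longrightarrow> \<not> (v ! i = 1 \<and> v ! Suc i = 1)"
    using v unfolding Fib_words_def by auto
  define A where "A = {i. i < n \<and> v ! i = 1}"
  have "v = wd n A"
  proof (rule nth_equalityI)
    show "length v = length (wd n A)" using lv by simp
    fix i assume "i < length v"
    then have "v ! i \<in> {0,1}" using bin nth_mem by blast
    then show "v ! i = wd n A ! i" using \<open>i < length v\<close> lv unfolding A_def by auto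
  qed
  moreover have "card A = k" using wt lv unfolding weight_def A_def length_filter_conv_card by simp
  moreover have "sparse A" unfolding sparse_def A_def using adj by auto
  moreover have "A \<subseteq> {..<n}" unfolding A_def by auto
  ultimately show "\<exists>A. A \<subseteq> {..<n} \<and> v = wd n A \<and> card A = k \<and> sparse A" by blast
next
  assume "\<exists>A. A \<subseteq> {..<n} \<and> v = wd n A \<and> card A = k \<and> sparse A"
  then obtain A where A: "A \<subseteq> {..<n}" "v = wd n A" "card A = k" "sparse A" by blast
  have "weight v = card {i. i < n \<and> i \<in> A}"
    unfolding weight_def length_filter_conv_card A(2) by (rule arg_cong[where f=card]) (auto split: if_splits)
  also have "{i. i < n \<and> i \<in> A} = A" using A(1) by auto
  finally have w: "weight v = k" using A(3) by simp
  have "set v \<subseteq> {0,1}" unfolding A(2) wd_def by auto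
  moreover have "\<forall>i. Suc i < n \<longrightarrow> \<not> (v ! i = 1 \<and> v ! Suc i = 1)"
    using A(4) unfolding A(2) sparse_def by (auto split: if_splits)
  ultimately show "v \<in> Fib_words n k" unfolding Fib_words_def using w A(2) by simp
qed

lemma good_Suc_iff: "good (Suc n) k A \<longleftrightarrow> A \<subseteq> {..<n} \<and> card A = k \<and> sparse A"
  unfolding good_def by auto

lemma snoc_H: "length v = n \<Longrightarrow> v @ [0] \<in> H (Suc n) k \<longleftrightarrow> v \<in> Fib_words n k"
proof
  assume lv: "length v = n" and h: "v @ [0] \<in> H (Suc n) k"
  then obtain A where A: "v @ [0] = wd (Suc n) A" "good (Suc n) k A" using H_elem by blast
  have As: "A \<subseteq> {..<n}" using A(2) good_Suc_iff by blast
  have "v @ [0] = wd n A @ [0]" using A(1) wd_snoc0[OF As] by simp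
  then have "v = wd n A" by simp
  then show "v \<in> Fib_words n k" using Fib_wd A(2) As good_Suc_iff by blast
next
  assume "v \<in> Fib_words n k"
  then obtain A where A: "A \<subseteq> {..<n}" "v = wd n A" "card A = k" "sparse A" using Fib_wd by blast
  have "v @ [0] = wd (Suc n) A" using wd_snoc0[OF A(1)] A(2) by simp
  moreover have "A \<subseteq> {..<Suc n}" using A(1) by auto
  ultimately show "v @ [0] \<in> H (Suc n) k" using H_mem good_Suc_iff A by simp
qed

lemma H_snoc: "w \<in> H (Suc n) k \<Longrightarrow> \<exists>v. v \<in> Fib_words n k \<and> w = v @ [0]"
proof -
  assume "w \<in> H (Suc n) k"
  then obtain A where A: "w = wd (Suc n) A" "good (Suc n) k A" using H_elem by blast
  have As: "A \<subseteq> {..<n}" using A(2) good_Suc_iff by blast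
  have w: "w = wd n A @ [0]" using A(1) wd_snoc0[OF As] by simp
  then have "wd n A \<in> Fib_words n k" using snoc_H[of "wd n A" n k] \<open>w \<in> H (Suc n) k\<close> by simp
  then show ?thesis using w by blast
qed

lemma Fib_finite: "finite (Fib_words n k)"
proof -
  have "Fib_words n k \<subseteq> {xs. set xs \<subseteq> {0,1} \<and> length xs = n}" unfolding Fib_words_def by auto
  moreover have "finite {xs. set xs \<subseteq> {0::nat,1} \<and> length xs = n}" by (rule finite_lists_length_eq) simp
  ultimately show ?thesis by (rule finite_subset)
qed

lemma simul_top: "simul (H (Suc n) k) (Fib_words n k) n [0]"
proof (rule simul.intro)
  fix v :: "nat list" assume "length v = n" then show "v @ [0] \<in> H (Suc n) k \<longleftrightarrow> v \<in> Fib_words n k"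
    by (rule snoc_H)
next
  fix v assume "v \<in> Fib_words n k" then show "length v = n" unfolding Fib_words_def by simp
next
  fix v p q assume v: "v \<in> Fib_words n k" and p: "p < n" and h: "htrans (v @ [0]) p q"
    and sw: "swap_pos (v @ [0]) p q \<in> H (Suc n) k"
  obtain A where A: "A \<subseteq> {..<n}" "v = wd n A" using v Fib_wd by blast
  have e: "v @ [0] = wd (Suc n) A" using wd_snoc0[OF A(1)] A(2) by simp
  have ht: "p < Suc n" "q < Suc n" "p \<in> A" "q \<notin> A" using h unfolding e htrans_wd by auto
  show "q < n"
  proof (rule ccontr)
    assume "\<not> q < n"
    then have qn: "q = n" using ht(2) by simp
    have "swap_pos (v @ [0]) p q = wd (Suc n) (insert q (A - {p}))"
      unfolding e by (rule swap_wd[OF ht(3) ht(4) ht(1) ht(2)])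
    moreover have "insert q (A - {p}) \<subseteq> {..<Suc n}" using A(1) ht(2) by auto
    ultimately have "good (Suc n) k (insert q (A - {p}))" using sw H_mem by simp
    then show False using qn good_Suc_iff by auto
  qed
qed

lemma greedy_top:
  assumes a: "a \<in> Fib_words n k"
  shows "greedy (H (Suc n) k) (a @ [0]) = map (\<lambda>v. v @ [0]) (greedy (Fib_words n k) a)"
proof -
  interpret T: simul "H (Suc n) k" "Fib_words n k" n "[0]" by (rule simul_top)
  have e: "T.emb = (\<lambda>v. v @ [0])" unfolding T.emb_def by (rule ext) simp
  let ?G = "greedy (Fib_words n k) a"
  have L0: "\<And>w. w \<in> set ([]::nat list list) \<Longrightarrow> w \<notin> T.emb ` Fib_words n k" by simp
  have r: "runs (H (Suc n) k) ([] @ [T.emb a]) ([] @ map T.emb ?G)" by (rule T.sim_run[OF Fib_finite a L0])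
  have Gne: "?G \<noteq> []" and Gs: "set ?G \<subseteq> Fib_words n k"
    using iter_prefix[where S="Fib_words n k" and i="card (Fib_words n k)" and x="[a]"]
      iter_props[of "[a]" "Fib_words n k" "card (Fib_words n k)"] a unfolding greedy_def by auto
  have st: "cands (Fib_words n k) ?G = {}" by (rule greedy_stuck[OF Fib_finite a])
  have "cands (H (Suc n) k) (map T.emb ?G) = {}"
  proof (rule equals0I)
    fix z assume z: "z \<in> cands (H (Suc n) k) (map T.emb ?G)"
    obtain p q where pq: "z = (p,q)" by (cases z)
    have "n \<le> p" using T.sim_stuck[of "[]", OF L0 Gne Gs st] z pq by simp
    moreover have "htrans (last ?G @ [0]) p q" using z pq Gne unfolding cands_def e by (simp add: last_map)
    moreover have "last ?G \<in> Fib_words n k" using Gs Gne last_in_set by blast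
    then have "length (last ?G) = n" unfolding Fib_words_def by simp
    ultimately show False unfolding htrans_def by (auto simp: nth_append)
  qed
  moreover have "a @ [0] \<in> H (Suc n) k" using snoc_H a unfolding Fib_words_def by auto
  ultimately have "greedy (H (Suc n) k) (a @ [0]) = map T.emb ?G"
    using greedy_eq[OF H_finite _ _] r unfolding e by simp
  then show ?thesis unfolding e .
qed

lemma ham_iff:
  assumes a: "a \<in> Fib_words n k"
  shows "Fib_words n k \<subseteq> set (greedy (Fib_words n k) a) \<longleftrightarrow>
         H (Suc n) k \<subseteq> set (greedy (H (Suc n) k) (a @ [0]))"
proof -
  define GH where "GH = greedy (H (Suc n) k) (a @ [0])"
  have s: "set GH = (\<lambda>v. v @ [0]) ` set (greedy (Fib_words n k) a)"
    using greedy_top[OF a] unfolding GH_def by simp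
  have H: "H (Suc n) k = (\<lambda>v. v @ [0]) ` Fib_words n k"
  proof
    show "H (Suc n) k \<subseteq> (\<lambda>v. v @ [0]) ` Fib_words n k" using H_snoc by blast
    show "(\<lambda>v. v @ [0]) ` Fib_words n k \<subseteq> H (Suc n) k" using snoc_H unfolding Fib_words_def by auto
  qed
  have inj: "inj (\<lambda>v::nat list. v @ [0])" by (rule injI) simp
  have "H (Suc n) k \<subseteq> set GH \<longleftrightarrow> Fib_words n k \<subseteq> set (greedy (Fib_words n k) a)"
    unfolding s H using inj by (simp add: inj_image_subset_iff)
  then show ?thesis unfolding GH_def by simp
qed

lemma length_concat_rep[simp]: "length (concat (replicate r xs)) = r * length xs"
  by (induction r) auto

lemma shift3: "B \<subseteq> {..<b} \<Longrightarrow>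
   replicate a 0 @ wd b B @ replicate c 0 = wd (a + b + c) ((\<lambda>x. a + x) ` B)"
proof (rule nth_equalityI)
  assume B: "B \<subseteq> {..<b}"
  fix j assume "j < length (replicate a 0 @ wd b B @ replicate c 0)"
  then have j: "j < a + b + c" by simp
  have mem: "j \<in> (\<lambda>x. a + x) ` B \<longleftrightarrow> a \<le> j \<and> j - a \<in> B" by force
  show "(replicate a 0 @ wd b B @ replicate c 0) ! j = wd (a + b + c) ((\<lambda>x. a + x) ` B) ! j"
  proof (cases "j < a")
    case True then show ?thesis using j mem by (simp add: nth_append)
  next
    case False
    show ?thesis
    proof (cases "j < a + b")
      case True
      then have "j - a < b" using False by simp
      then show ?thesis using j mem False True by (simp add: nth_append)
    next
      case False2: False
      then have "j - a \<notin> B" using B by auto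
      moreover have "b \<le> j - a" using False2 by simp
      ultimately show ?thesis using j mem False False2 by (simp add: nth_append)
    qed
  qed
qed simp

lemma alt_word: "[1] @ concat (replicate r [0,1]) = wd (2*r + 1) (Ck 0 (Suc r))"
proof (induction r)
  case 0 then show ?case by (simp add: Ck_def wd_def)
next
  case (Suc r)
  have "[1] @ concat (replicate (Suc r) [0,1]) = ([1] @ concat (replicate r [0,1])) @ [0,1]"
    by (simp add: replicate_append_same[symmetric])
  also have "\<dots> = wd (2*r + 1) (Ck 0 (Suc r)) @ [0,1]" using Suc.IH by simp
  also have "\<dots> = wd (2 * Suc r + 1) (Ck 0 (Suc (Suc r)))"
  proof (rule nth_equalityI)
    fix j assume "j < length (wd (2*r + 1) (Ck 0 (Suc r)) @ [0,1])"
    then have j: "j < 2*r + 3" by simp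
    consider "j < 2*r+1" | "j = 2*r+1" | "j = 2*r + 2" using j by linarith
    then show "(wd (2*r + 1) (Ck 0 (Suc r)) @ [0,1]) ! j = wd (2 * Suc r + 1) (Ck 0 (Suc (Suc r))) ! j"
    proof cases
      case 1 then show ?thesis by (simp add: nth_append Ck_mem)
    next
      case 2 then show ?thesis by (simp add: nth_append Ck_mem)
    next
      case 3 then show ?thesis by (simp add: nth_append Ck_mem)
    qed
  qed simp
  finally show ?case .
qed

lemma Ck_shift: "(\<lambda>x. i + x) ` Ck 0 k = Ck i k"
  unfolding Ck_def by (auto simp: image_image)

lemma gen_word:
  assumes k: "1 \<le> k" and i: "i \<le> n + 1 - 2*k" and nk: "2*k \<le> n + 1"
  shows "(replicate i 0 @ [1] @ concat (replicate (k - 1) [0, 1]) @ replicate (n + 1 - 2 * k - i) 0) @ [0]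
         = wd (Suc n) (Ck i k)"
proof -
  obtain r where r: "k = Suc r" using k by (cases k) auto
  have sub: "Ck 0 (Suc r) \<subseteq> {..<2*r+1}" using Ck_Suc_lt by fastforce
  have "(replicate i 0 @ [1] @ concat (replicate (k - 1) [0, 1]) @ replicate (n + 1 - 2 * k - i) 0) @ [0]
      = replicate i 0 @ ([1] @ concat (replicate r [0, 1])) @ replicate (Suc (n + 1 - 2 * k - i)) 0"
    using r by (simp add: replicate_append_same)
  also have "\<dots> = replicate i 0 @ wd (2*r+1) (Ck 0 (Suc r)) @ replicate (Suc (n + 1 - 2 * k - i)) 0"
    by (simp only: alt_word)
  also have "\<dots> = wd (i + (2*r+1) + Suc (n + 1 - 2 * k - i)) ((\<lambda>x. i + x) ` Ck 0 (Suc r))"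
    by (rule shift3[OF sub])
  also have "i + (2*r+1) + Suc (n + 1 - 2 * k - i) = Suc n" using r i nk by simp
  finally show ?thesis using Ck_shift r by simp
qed

theorem proposition1:
  fixes n k :: nat
  assumes "n \<ge> 1" and "k \<ge> 1" and "n \<ge> 2 * k - 1"
  shows "GenF n k = {replicate i 0 @ [1] @ concat (replicate (k - 1) [0, 1]) @ replicate (n + 1 - 2 * k - i) 0
                      | i. i \<le> n + 1 - 2 * k}
         \<and> card (GenF n k) = n + 2 - 2 * k"
proof -
  define W :: "nat \<Rightarrow> nat list" where "W i = replicate i 0 @ [1] @ concat (replicate (k - 1) [0, 1]) @ replicate (n + 1 - 2 * k - i) 0" for i
  define Mx where "Mx = n + 1 - 2*k"
  have nk: "2*k \<le> Suc n" using assms by simp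
  have MxS: "Suc n - 2*k = Mx" unfolding Mx_def by simp
  have Wi: "W i @ [0] = wd (Suc n) (Ck i k)" if "i \<le> Mx" for i
    using gen_word[of k i n] assms(2) that nk unfolding W_def Mx_def by simp
  note MN = main[OF nk]
  have Ckm: "Ck i k \<subseteq> {..<Suc n}" if "i \<le> Mx" for i
    using that Ck_Suc_lt[of _ i k] nk unfolding Mx_def by fastforce
  have WF: "W i \<in> Fib_words n k" if "i \<le> Mx" for i
  proof -
    have "length (W i) = n" using that nk unfolding W_def Mx_def using assms(2) by (cases k) auto
    moreover have "W i @ [0] \<in> H (Suc n) k"
      using Wi[OF that] H_mem[OF Ckm[OF that]] Ck_good[of i k "Suc n"] that nk unfolding Mx_def by simp
    ultimately show ?thesis using snoc_H by blast
  qed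
  have gen: "GenF n k = W ` {..Mx}"
  proof
    show "W ` {..Mx} \<subseteq> GenF n k"
    proof
      fix a assume "a \<in> W ` {..Mx}"
      then obtain i where i: "i \<le> Mx" "a = W i" by blast
      have aF: "a \<in> Fib_words n k" using WF i by simp
      have "set (greedy (H (Suc n) k) (wd (Suc n) (Ck i k))) = H (Suc n) k"
        using MN i MxS by simp
      then have "H (Suc n) k \<subseteq> set (greedy (H (Suc n) k) (a @ [0]))" using Wi[OF i(1)] i(2) by simp
      then show "a \<in> GenF n k" unfolding GenF_def using ham_iff[OF aF] aF by simp
    qed
  next
    show "GenF n k \<subseteq> W ` {..Mx}"
    proof
      fix a assume "a \<in> GenF n k"
      then have aF: "a \<in> Fib_words n k" and ham: "Fib_words n k \<subseteq> set (greedy (Fib_words n k) a)"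
        unfolding GenF_def by auto
      have hamH: "H (Suc n) k \<subseteq> set (greedy (H (Suc n) k) (a @ [0]))" using ham ham_iff[OF aF] by simp
      obtain A where A: "A \<subseteq> {..<n}" "a = wd n A" "card A = k" "sparse A" using aF Fib_wd by blast
      have As: "A \<subseteq> {..<Suc n}" using A(1) by auto
      have ea: "a @ [0] = wd (Suc n) A" using wd_snoc0[OF A(1)] A(2) by simp
      have la: "length a = n" using aF unfolding Fib_words_def by simp
      have aH: "wd (Suc n) A \<in> H (Suc n) k" using snoc_H[OF la] aF ea by simp
      show "a \<in> W ` {..Mx}"
      proof (cases "\<exists>i \<le> Mx. A = Ck i k")
        case True
        then obtain i where i: "i \<le> Mx" "A = Ck i k" by blast
        then have "a @ [0] = W i @ [0]" using ea Wi by simp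
        then show ?thesis using i by auto
      next
        case False
        then have "wd (Suc n) (Ck 0 k) \<notin> set (greedy (H (Suc n) k) (wd (Suc n) A))"
          using MN As aH MxS by auto
        moreover have "wd (Suc n) (Ck 0 k) \<in> H (Suc n) k"
          using H_mem[OF Ckm[of 0]] Ck_good[of 0 k "Suc n"] nk by simp
        ultimately show ?thesis using hamH ea by auto
      qed
    qed
  qed
  have inj: "inj_on W {..Mx}"
  proof (rule inj_onI)
    fix i j assume ij: "i \<in> {..Mx}" "j \<in> {..Mx}" "W i = W j"
    then have "wd (Suc n) (Ck i k) = wd (Suc n) (Ck j k)" using Wi by (metis atMost_iff)
    then have "Ck i k = Ck j k" using wd_inj Ckm ij by simp
    then show "i = j" using Ck_inj assms(2) by simp
  qed
  have "card (GenF n k) = Suc Mx" using gen card_image[OF inj] by simp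
  moreover have "Suc Mx = n + 2 - 2*k" unfolding Mx_def using nk by simp
  moreover have "{W i | i. i \<le> n + 1 - 2 * k} = W ` {..Mx}" unfolding Mx_def by auto
  ultimately show ?thesis using gen unfolding W_def by simp
qed

end
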